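(* Let $f:[a,b]\times[c,d]\to\mathbb{R}$ be continuous, with $0<a<b<\infty$, $0<c<d<\infty$ and $-1<p,q\le 0$. (1) If $0<\alpha,\beta<1$, then $$2\le\dim_H\Big(G\big({}^{(p,q)}_{(a,c)}\mathfrak{I}^{(\alpha,\beta)}f\big)\Big)\le\overline{\dim}_B\Big(G\big({}^{(p,q)}_{(a,c)}\mathfrak{I}^{(\alpha,\beta)}f\big)\Big)\le 3-\min\{\alpha,\beta\}.$$ (2) If $\alpha,\beta\ge1$, then the box dimension exists and $$\dim_H\Big(G\big({}^{(p,q)}_{(a,c)}\mathfrak{I}^{(\alpha,\beta)}f\big)\Big)=\dim_B\Big(G\big({}^{(p,q)}_{(a,c)}\mathfrak{I}^{(\alpha,\beta)}f\big)\Big)=2.$$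
   Context: For $f:[a,b]\times[c,d]\to\mathbb{R}$ with $0<a<b$, $0<c<d$, real $\alpha,\beta>0$ and $(p,q)\neq(-1,-1)$, the mixed Katugampola fractional integral is $$\big({}^{(p,q)}_{(a,c)}\mathfrak{I}^{(\alpha,\beta)}f\big)(x,y)=\frac{(p+1)^{1-\alpha}(q+1)^{1-\beta}}{\Gamma(\alpha)\Gamma(\beta)}\int_a^x\int_c^y (x^{p+1}-s^{p+1})^{\alpha-1}(y^{q+1}-t^{q+1})^{\beta-1}s^{p}t^{q}f(s,t)\,\mathrm{d}t\,\mathrm{d}s.$$ $G(g)=\{(x,y,g(x,y))\}\subset\mathbb{R}^3$ is the graph; $\dim_H$, $\dim_B$, $\overline{\dim}_B$ denote Hausdorff, box and upper box dimension. *)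

theory Defs
  imports "HOL-Analysis.Analysis"
begin

text \<open>The double integral is the (Henstock--Kurzweil) integral over the rectangle
  [a,x]x[c,y]; for these integrands it coincides with the Lebesgue integral.\<close>
definition katugampola_mixed ::
  "real \<Rightarrow> real \<Rightarrow> real \<Rightarrow> real \<Rightarrow> real \<Rightarrow> real \<Rightarrow> (real \<times> real \<Rightarrow> real) \<Rightarrow> real \<times> real \<Rightarrow> real" where
  "katugampola_mixed p q a c \<alpha> \<beta> f = (\<lambda>(x, y).
     (p + 1) powr (1 - \<alpha>) * (q + 1) powr (1 - \<beta>) / (Gamma \<alpha> * Gamma \<beta>) *
     integral (cbox (a, c) (x, y))
       (\<lambda>(s, t). (x powr (p + 1) - s powr (p + 1)) powr (\<alpha> - 1) *
                 (y powr (q + 1) - t powr (q + 1)) powr (\<beta> - 1) *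
                 s powr p * t powr q * f (s, t)))"

text \<open>Graph of g over [a,b]x[c,d], as a subset of R^3 = (R x R) x R
  (the product metric is the Euclidean one).\<close>
definition graph_on :: "real \<Rightarrow> real \<Rightarrow> real \<Rightarrow> real \<Rightarrow> (real \<times> real \<Rightarrow> real) \<Rightarrow> ((real \<times> real) \<times> real) set" where
  "graph_on a b c d g = {((x, y), g (x, y)) | x y. x \<in> {a..b} \<and> y \<in> {c..d}}"

text \<open>s-power of the diameter, with the conventions diam({})^s = 0 and t^0 = 1.\<close>
definition diam_pow :: "real \<Rightarrow> 'a::metric_space set \<Rightarrow> ennreal" where
  "diam_pow s U = (if U = {} then 0 else if s = 0 then 1 else ennreal (diameter U powr s))"

definition hausdorff_pre :: "real \<Rightarrow> real \<Rightarrow> 'a::metric_space set \<Rightarrow> ennreal" where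
  "hausdorff_pre s \<delta> E = Inf {(\<Sum>i. diam_pow s (U i)) | U.
       E \<subseteq> (\<Union>i. U i) \<and> (\<forall>i. bounded (U i) \<and> diameter (U i) \<le> \<delta>)}"

definition hausdorff_measure :: "real \<Rightarrow> 'a::metric_space set \<Rightarrow> ennreal" where
  "hausdorff_measure s E = (SUP \<delta>\<in>{0<..}. hausdorff_pre s \<delta> E)"

definition hausdorff_dim :: "'a::metric_space set \<Rightarrow> ereal" where
  "hausdorff_dim E = Inf {ereal s | s. s \<ge> 0 \<and> hausdorff_measure s E = 0}"

definition cover_number :: "real \<Rightarrow> 'a::metric_space set \<Rightarrow> nat" where
  "cover_number \<delta> E = Inf {card C | C. finite C \<and> E \<subseteq> \<Union>C \<and>
       (\<forall>U\<in>C. bounded U \<and> diameter U \<le> \<delta>)}"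

definition upper_box_dim :: "'a::metric_space set \<Rightarrow> ereal" where
  "upper_box_dim E = Limsup (at_right 0) (\<lambda>\<delta>. ereal (ln (real (cover_number \<delta> E)) / - ln \<delta>))"

definition lower_box_dim :: "'a::metric_space set \<Rightarrow> ereal" where
  "lower_box_dim E = Liminf (at_right 0) (\<lambda>\<delta>. ereal (ln (real (cover_number \<delta> E)) / - ln \<delta>))"

definition box_dim_exists :: "'a::metric_space set \<Rightarrow> bool" where
  "box_dim_exists E \<longleftrightarrow> lower_box_dim E = upper_box_dim E"

definition box_dim :: "'a::metric_space set \<Rightarrow> ereal" where
  "box_dim E = upper_box_dim E"

end

theory Submission
  imports Defs
begin

definition kern :: "real \<Rightarrow> real \<Rightarrow> real \<Rightarrow> real \<Rightarrow> real \<Rightarrow> real" where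
  "kern p \<alpha> u x s = (if u \<le> s \<and> s \<le> x then (x powr (p+1) - s powr (p+1)) powr (\<alpha> - 1) * s powr p else 0)"

lemma kern_nonneg: "0 \<le> kern p \<alpha> u x s"
  by (simp add: kern_def)

lemma kern_measurable[measurable]: "kern p \<alpha> u x \<in> borel_measurable borel"
  unfolding kern_def by measurable

lemma kern_FTC:
  assumes u: "0 < u" "u < x" and p: "-1 < p" and al: "0 < \<alpha>"
  shows "integrable lborel (kern p \<alpha> u x)"
    "integral\<^sup>L lborel (kern p \<alpha> u x) = (x powr (p+1) - u powr (p+1)) powr \<alpha> / (\<alpha>*(p+1))"
proof -
  define \<phi> where "\<phi> s = (x powr (p+1) - s powr (p+1)) powr (\<alpha> - 1) * s powr p" for s
  define F where "F s = (- ((x powr (p+1) - s powr (p+1)) powr \<alpha>)) / (\<alpha>*(p+1))" for s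
  have e: "0 < p + 1" using p by simp
  have deriv: "DERIV F s :> \<phi> s" if "u < s" "s < x" for s
  proof -
    have s0: "0 < s" using that u by simp
    have lt: "s powr (p+1) < x powr (p+1)" using that s0 e by (simp add: powr_less_mono2)
    have d1: "DERIV (\<lambda>s. s powr (p+1)) s :> (p+1) * s powr p"
      using s0 by (auto intro!: derivative_eq_intros)
    have d2: "DERIV (\<lambda>s. (x powr (p+1) - s powr (p+1)) powr \<alpha>) s :>
        \<alpha> * (x powr (p+1) - s powr (p+1)) powr (\<alpha> - 1) * (- ((p+1) * s powr p))"
      using DERIV_fun_powr[of "\<lambda>s. x powr (p+1) - s powr (p+1)" "- ((p+1) * s powr p)" s \<alpha>] d1 lt s0
      by (auto intro!: derivative_eq_intros)
    have eqv: "- (\<alpha> * (x powr (p+1) - s powr (p+1)) powr (\<alpha> - 1) * (- ((p+1) * s powr p))) / (\<alpha>*(p+1))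
        = \<phi> s"
    proof -
      have nz: "\<alpha>*(p+1) \<noteq> 0" using al e by simp
      show ?thesis unfolding \<phi>_def using nz by (simp add: divide_simps)
    qed
    show ?thesis unfolding F_def
      using DERIV_cdivide[OF DERIV_minus[OF d2], of "\<alpha>*(p+1)"] eqv
      by (metis (no_types, lifting) DERIV_cong)
  qed
  have cont: "isCont \<phi> s" if "u < s" "s < x" for s
  proof -
    have s0: "0 < s" using that u by simp
    have lt: "s powr (p+1) < x powr (p+1)" using that s0 e by (simp add: powr_less_mono2)
    show ?thesis unfolding \<phi>_def using s0 lt
      by (auto intro!: continuous_intros)
  qed
  have nn: "AE s in lborel. ereal u < ereal s \<longrightarrow> ereal s < ereal x \<longrightarrow> 0 \<le> \<phi> s"
    by (simp add: \<phi>_def)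
  have A: "((F \<circ> real_of_ereal) \<longlongrightarrow> F u) (at_right (ereal u))"
  proof -
    have "isCont F u"
    proof -
      have lt: "u powr (p+1) < x powr (p+1)" using u e by (simp add: powr_less_mono2)
      show ?thesis unfolding F_def
        by (intro continuous_intros) (use u lt al e in auto)
    qed
    then have "(F \<longlongrightarrow> F u) (at_right u)"
      by (simp add: isCont_def filterlim_at_split)
    then show ?thesis by (simp add: ereal_tendsto_simps)
  qed
  have B: "((F \<circ> real_of_ereal) \<longlongrightarrow> 0) (at_left (ereal x))"
  proof -
    have "((\<lambda>s. (x powr (p+1) - s powr (p+1)) powr \<alpha>) \<longlongrightarrow> 0) (at_left x)"
    proof (rule tendsto_zero_powrI)
      have "((\<lambda>s. x powr (p+1) - s powr (p+1)) \<longlongrightarrow> x powr (p+1) - x powr (p+1)) (at_left x)"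
        using u by (auto intro!: tendsto_eq_intros)
      then show "((\<lambda>s. x powr (p+1) - s powr (p+1)) \<longlongrightarrow> 0) (at_left x)" by simp
      show "((\<lambda>_. \<alpha>) \<longlongrightarrow> \<alpha>) (at_left x)" by simp
      show "\<forall>\<^sub>F s in at_left x. 0 \<le> x powr (p+1) - s powr (p+1)"
        using eventually_at_left_real[OF u(2)] 
        by eventually_elim (use u e in \<open>auto intro: powr_mono2\<close>)
    qed (use al in auto)
    note lim = this
    have "(F \<longlongrightarrow> 0) (at_left x)" unfolding F_def
      using tendsto_divide_zero[OF tendsto_minus[OF lim, simplified], of "\<alpha>*(p+1)"] by simp
    then show ?thesis by (simp add: ereal_tendsto_simps)
  qed
  have lt: "ereal u < ereal x" using u by simp
  have deriv': "\<And>s. ereal u < ereal s \<Longrightarrow> ereal s < ereal x \<Longrightarrow> DERIV F s :> \<phi> s"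
    using deriv by simp
  have cont': "\<And>s. ereal u < ereal s \<Longrightarrow> ereal s < ereal x \<Longrightarrow> isCont \<phi> s"
    using cont by simp
  note R = interval_integral_FTC_nonneg[OF lt deriv' cont' nn A B]
  have R1: "set_integrable lborel {u<..<x} \<phi>" using R(1) unfolding einterval_eq_Icc .
  have R2: "(LINT s:{u<..<x}|lborel. \<phi> s) = 0 - F u"
    using R(2) lt unfolding interval_lebesgue_integral_def einterval_eq_Icc by simp
  have ae: "AE s in lborel. indicator {u<..<x} s *\<^sub>R \<phi> s = kern p \<alpha> u x s"
    using AE_lborel_singleton[of u]
    by eventually_elim (auto simp: kern_def \<phi>_def indicator_def)
  have m1: "(\<lambda>s. indicator {u<..<x} s *\<^sub>R \<phi> s) \<in> borel_measurable lborel"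
    using R1 unfolding set_integrable_def by (rule borel_measurable_integrable)
  have m2: "kern p \<alpha> u x \<in> borel_measurable lborel" by simp
  show "integrable lborel (kern p \<alpha> u x)"
    using integrable_cong_AE[OF m1 m2 ae] R1 unfolding set_integrable_def by simp
  have "integral\<^sup>L lborel (kern p \<alpha> u x) = (LINT s:{u<..<x}|lborel. \<phi> s)"
    unfolding set_lebesgue_integral_def using integral_cong_AE[OF m1 m2 ae] by simp
  also have "\<dots> = (x powr (p+1) - u powr (p+1)) powr \<alpha> / (\<alpha>*(p+1))"
    unfolding R2 F_def by simp
  finally show "integral\<^sup>L lborel (kern p \<alpha> u x) = (x powr (p+1) - u powr (p+1)) powr \<alpha> / (\<alpha>*(p+1))" .
qed


lemma kern_int:
  assumes u: "0 < u" "u \<le> x" and p: "-1 < p" and al: "0 < \<alpha>"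
  shows "integrable lborel (kern p \<alpha> u x)"
    "integral\<^sup>L lborel (kern p \<alpha> u x) = (x powr (p+1) - u powr (p+1)) powr \<alpha> / (\<alpha>*(p+1))"
proof -
  have "integrable lborel (kern p \<alpha> u x) \<and>
     integral\<^sup>L lborel (kern p \<alpha> u x) = (x powr (p+1) - u powr (p+1)) powr \<alpha> / (\<alpha>*(p+1))"
  proof (cases "u = x")
    case True
    have "kern p \<alpha> u x = (\<lambda>_. 0)" using True by (auto simp: kern_def fun_eq_iff)
    then show ?thesis using True by simp
  next
    case False
    then show ?thesis using kern_FTC[of u x p \<alpha>] assms by simp
  qed
  then show "integrable lborel (kern p \<alpha> u x)"
    "integral\<^sup>L lborel (kern p \<alpha> u x) = (x powr (p+1) - u powr (p+1)) powr \<alpha> / (\<alpha>*(p+1))" by auto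
qed

lemma pow_e_lip:
  fixes a x x' p :: real
  assumes "0 < a" "a \<le> x" "x \<le> x'" "-1 < p" "p \<le> 0"
  shows "x' powr (p+1) - x powr (p+1) \<le> (p+1) * a powr p * (x' - x)"
proof (cases "x = x'")
  case True then show ?thesis by simp
next
  case False
  then have lt: "x < x'" using assms by simp
  have d: "\<And>t. x \<le> t \<Longrightarrow> t \<le> x' \<Longrightarrow> DERIV (\<lambda>t. t powr (p+1)) t :> (p+1) * t powr p"
    using assms by (auto intro!: derivative_eq_intros)
  obtain z where z: "x < z" "z < x'" "x' powr (p+1) - x powr (p+1) = (x' - x) * ((p+1) * z powr p)"
    using MVT2[OF lt, of "\<lambda>t. t powr (p+1)" "\<lambda>t. (p+1) * t powr p"] d by auto
  have "z powr p \<le> a powr p" using powr_mono2'[of p a z] assms z by simp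
  then have "(p+1) * z powr p \<le> (p+1) * a powr p" using assms by (intro mult_left_mono) auto
  then show ?thesis using z lt by (simp add: mult.commute mult_left_mono)
qed

lemma powr_diff_le:
  fixes v w \<alpha> :: real
  assumes "0 \<le> v" "v \<le> w" "1 \<le> \<alpha>"
  shows "w powr \<alpha> - v powr \<alpha> \<le> \<alpha> * w powr (\<alpha>-1) * (w - v)"
proof (cases "v = w")
  case True then show ?thesis by simp
next
  case False
  then have lt: "v < w" using assms by simp
  have c: "continuous_on {v..w} (\<lambda>t. t powr \<alpha>)"
    using assms by (intro continuous_on_powr') (auto intro: continuous_intros)
  have dif: "(\<lambda>t. t powr \<alpha>) differentiable (at t)" if "v < t" "t < w" for t
    using that assms by (auto intro!: derivative_eq_intros simp: real_differentiable_def)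
  obtain l z where z: "v < z" "z < w" "DERIV (\<lambda>t. t powr \<alpha>) z :> l" "w powr \<alpha> - v powr \<alpha> = (w - v) * l"
    using MVT[OF lt c dif] by blast
  have "DERIV (\<lambda>t. t powr \<alpha>) z :> \<alpha> * z powr (\<alpha> - 1)"
    using z assms by (auto intro!: derivative_eq_intros)
  then have l: "l = \<alpha> * z powr (\<alpha> - 1)" using DERIV_unique z(3) by blast
  have "z powr (\<alpha> - 1) \<le> w powr (\<alpha> - 1)" using assms z by (intro powr_mono2) auto
  then have "l \<le> \<alpha> * w powr (\<alpha>-1)" using l assms by simp
  then show ?thesis using z lt by (simp add: mult.commute mult_left_mono)
qed


definition Ck :: "real \<Rightarrow> real \<Rightarrow> real \<Rightarrow> real \<Rightarrow> real" where
  "Ck p \<alpha> a b = (if \<alpha> < 1 then 2 * ((p+1) * a powr p) powr \<alpha> / (\<alpha>*(p+1))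
      else (b powr (p+1)) powr (\<alpha>-1) * a powr p)"

lemma cancel_helper: "c \<noteq> 0 \<Longrightarrow> d \<noteq> 0 \<Longrightarrow> c * A * (d * B * C) / (c*d) = A * B * (C::real)"
  by (simp add: field_simps)

lemma kern_abs_diff:
  fixes a b x x' p \<alpha> :: real
  assumes a: "0 < a" "a \<le> x" "x \<le> x'" "x' \<le> b" and p: "-1 < p" "p \<le> 0" and al: "0 < \<alpha>"
  shows "integrable lborel (\<lambda>s. \<bar>kern p \<alpha> a x' s - kern p \<alpha> a x s\<bar>)"
    "(\<integral>s. \<bar>kern p \<alpha> a x' s - kern p \<alpha> a x s\<bar> \<partial>lborel) \<le> Ck p \<alpha> a b * (x' - x) powr (min \<alpha> 1)"
proof -
  have e: "0 < p + 1" using p by simp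
  note I1 = kern_int[of a x p \<alpha>] and I2 = kern_int[of a x' p \<alpha>] and I3 = kern_int[of x x' p \<alpha>]
  have i1: "integrable lborel (kern p \<alpha> a x)" using I1 a p al by simp
  have i2: "integrable lborel (kern p \<alpha> a x')" using I2 a p al by simp
  have i3: "integrable lborel (kern p \<alpha> x x')" using I3 a p al by simp
  show int: "integrable lborel (\<lambda>s. \<bar>kern p \<alpha> a x' s - kern p \<alpha> a x s\<bar>)"
    by (rule integrable_abs) (rule Bochner_Integration.integrable_diff[OF i2 i1])
  have xe: "x powr (p+1) \<le> x' powr (p+1)" using a e by (intro powr_mono2) auto
  have ae: "a powr (p+1) \<le> x powr (p+1)" using a e by (intro powr_mono2) auto
  have lip: "x' powr (p+1) - x powr (p+1) \<le> (p+1) * a powr p * (x' - x)"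
    using pow_e_lip[of a x x' p] a p by simp
  show "(\<integral>s. \<bar>kern p \<alpha> a x' s - kern p \<alpha> a x s\<bar> \<partial>lborel) \<le> Ck p \<alpha> a b * (x' - x) powr (min \<alpha> 1)"
  proof (cases "\<alpha> < 1")
    case True
    have pw: "\<bar>kern p \<alpha> a x' s - kern p \<alpha> a x s\<bar> \<le>
        kern p \<alpha> a x s - kern p \<alpha> a x' s + 2 * kern p \<alpha> x x' s" for s
    proof -
      consider "s < a" | "a \<le> s" "s < x" | "s = x" | "x < s" "s \<le> x'" | "x' < s" by linarith
      then show ?thesis
      proof cases
        case 2
        have s0: "0 < s" using 2 a by simp
        have lt: "s powr (p+1) < x powr (p+1)" using 2 s0 e by (intro powr_less_mono2) auto
        have "(x' powr (p+1) - s powr (p+1)) powr (\<alpha> - 1) \<le> (x powr (p+1) - s powr (p+1)) powr (\<alpha> - 1)"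
          using lt xe True by (intro powr_mono2') auto
        then have "(x' powr (p+1) - s powr (p+1)) powr (\<alpha> - 1) * s powr p \<le> (x powr (p+1) - s powr (p+1)) powr (\<alpha> - 1) * s powr p"
          by (intro mult_right_mono) auto
        then show ?thesis using 2 a by (simp add: kern_def)
      qed (use a in \<open>auto simp: kern_def\<close>)
    qed
    have "(\<integral>s. \<bar>kern p \<alpha> a x' s - kern p \<alpha> a x s\<bar> \<partial>lborel) \<le>
        (\<integral>s. kern p \<alpha> a x s - kern p \<alpha> a x' s + 2 * kern p \<alpha> x x' s \<partial>lborel)"
      using int i1 i2 i3 pw by (intro integral_mono) auto
    also have "\<dots> = integral\<^sup>L lborel (kern p \<alpha> a x) - integral\<^sup>L lborel (kern p \<alpha> a x') + 2 * integral\<^sup>L lborel (kern p \<alpha> x x')"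
      using i1 i2 i3 by simp
    also have "\<dots> \<le> 2 * integral\<^sup>L lborel (kern p \<alpha> x x')"
    proof -
      have "(x powr (p+1) - a powr (p+1)) powr \<alpha> \<le> (x' powr (p+1) - a powr (p+1)) powr \<alpha>"
        using xe ae al by (intro powr_mono2) auto
      then have "(x powr (p+1) - a powr (p+1)) powr \<alpha> / (\<alpha>*(p+1)) \<le> (x' powr (p+1) - a powr (p+1)) powr \<alpha> / (\<alpha>*(p+1))"
        using al e by (intro divide_right_mono) auto
      then show ?thesis using I1 I2 a p al by simp
    qed
    also have "\<dots> = 2 * (x' powr (p+1) - x powr (p+1)) powr \<alpha> / (\<alpha>*(p+1))"
      using I3 a p al by simp
    also have "\<dots> \<le> 2 * ((p+1) * a powr p * (x' - x)) powr \<alpha> / (\<alpha>*(p+1))"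
    proof -
      have "(x' powr (p+1) - x powr (p+1)) powr \<alpha> \<le> ((p+1) * a powr p * (x' - x)) powr \<alpha>"
        using xe lip al by (intro powr_mono2) auto
      then show ?thesis using al e by (intro divide_right_mono) auto
    qed
    also have "\<dots> = Ck p \<alpha> a b * (x' - x) powr (min \<alpha> 1)"
      using True a e by (simp add: Ck_def powr_mult)
    finally show ?thesis .
  next
    case False
    have pw: "\<bar>kern p \<alpha> a x' s - kern p \<alpha> a x s\<bar> = kern p \<alpha> a x' s - kern p \<alpha> a x s" for s
    proof -
      consider "s < a" | "a \<le> s" "s < x" | "s = x" | "x < s" "s \<le> x'" | "x' < s" by linarith
      then show ?thesis
      proof cases
        case 2
        have s0: "0 < s" using 2 a by simp
        have lt: "s powr (p+1) < x powr (p+1)" using 2 s0 e by (intro powr_less_mono2) auto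
        have "(x powr (p+1) - s powr (p+1)) powr (\<alpha> - 1) \<le> (x' powr (p+1) - s powr (p+1)) powr (\<alpha> - 1)"
          using lt xe False by (intro powr_mono2) auto
        then have "(x powr (p+1) - s powr (p+1)) powr (\<alpha> - 1) * s powr p \<le> (x' powr (p+1) - s powr (p+1)) powr (\<alpha> - 1) * s powr p"
          by (intro mult_right_mono) auto
        then show ?thesis using 2 a by (simp add: kern_def)
      qed (use a in \<open>auto simp: kern_def\<close>)
    qed
    have "(\<integral>s. \<bar>kern p \<alpha> a x' s - kern p \<alpha> a x s\<bar> \<partial>lborel) =
        integral\<^sup>L lborel (kern p \<alpha> a x') - integral\<^sup>L lborel (kern p \<alpha> a x)"
      unfolding pw using i1 i2 by simp
    also have "\<dots> = ((x' powr (p+1) - a powr (p+1)) powr \<alpha> - (x powr (p+1) - a powr (p+1)) powr \<alpha>) / (\<alpha>*(p+1))"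
      using I1 I2 a p al by (simp add: diff_divide_distrib)
    also have "\<dots> \<le> (\<alpha> * (x' powr (p+1) - a powr (p+1)) powr (\<alpha>-1) * ((p+1) * a powr p * (x' - x))) / (\<alpha>*(p+1))"
    proof -
      have "(x' powr (p+1) - a powr (p+1)) powr \<alpha> - (x powr (p+1) - a powr (p+1)) powr \<alpha>
          \<le> \<alpha> * (x' powr (p+1) - a powr (p+1)) powr (\<alpha>-1) * ((x' powr (p+1) - a powr (p+1)) - (x powr (p+1) - a powr (p+1)))"
        using xe ae False by (intro powr_diff_le) auto
      also have "\<dots> \<le> \<alpha> * (x' powr (p+1) - a powr (p+1)) powr (\<alpha>-1) * ((p+1) * a powr p * (x' - x))"
        using lip al by (intro mult_left_mono) auto
      finally show ?thesis using al e by (intro divide_right_mono) auto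
    qed
    also have "\<dots> = (x' powr (p+1) - a powr (p+1)) powr (\<alpha>-1) * a powr p * (x' - x)"
      using al e by (intro cancel_helper) auto
    also have "\<dots> \<le> (b powr (p+1)) powr (\<alpha>-1) * a powr p * (x' - x)"
    proof -
      have "x' powr (p+1) - a powr (p+1) \<le> b powr (p+1)"
        using a e by (smt (verit) powr_ge_zero powr_mono2)
      then have "(x' powr (p+1) - a powr (p+1)) powr (\<alpha>-1) \<le> (b powr (p+1)) powr (\<alpha>-1)"
        using False xe ae by (intro powr_mono2) auto
      then show ?thesis using a by (intro mult_right_mono) auto
    qed
    also have "\<dots> = Ck p \<alpha> a b * (x' - x) powr (min \<alpha> 1)"
      using False a by (simp add: Ck_def)
    finally show ?thesis .
  qed
qed


lemma meas_prod[measurable]: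
  fixes g1 g2 :: "real \<Rightarrow> real"
  assumes [measurable]: "g1 \<in> borel_measurable borel" "g2 \<in> borel_measurable borel"
  shows "(\<lambda>z::real\<times>real. g1 (fst z) * g2 (snd z)) \<in> borel_measurable borel"
proof -
  have "(\<lambda>z::real\<times>real. g1 (fst z) * g2 (snd z)) \<in> borel_measurable (borel \<Otimes>\<^sub>M borel)" by measurable
  then show ?thesis by (simp add: borel_prod)
qed

lemma prod_integral:
  fixes g1 g2 :: "real \<Rightarrow> real"
  assumes [measurable]: "g1 \<in> borel_measurable borel" "g2 \<in> borel_measurable borel"
    and nn: "\<And>s. 0 \<le> g1 s" "\<And>s. 0 \<le> g2 s"
    and i: "integrable lborel g1" "integrable lborel g2"
  shows "integrable lborel (\<lambda>z::real\<times>real. g1 (fst z) * g2 (snd z))"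
    "(\<integral>z. g1 (fst z) * g2 (snd z) \<partial>(lborel::(real\<times>real) measure)) = integral\<^sup>L lborel g1 * integral\<^sup>L lborel g2"
proof -
  have e1: "(\<integral>\<^sup>+s. ennreal (g1 s) \<partial>lborel) = ennreal (integral\<^sup>L lborel g1)"
    using i nn by (intro nn_integral_eq_integral) auto
  have e2: "(\<integral>\<^sup>+s. ennreal (g2 s) \<partial>lborel) = ennreal (integral\<^sup>L lborel g2)"
    using i nn by (intro nn_integral_eq_integral) auto
  have "(\<integral>\<^sup>+z. ennreal (g1 (fst z) * g2 (snd z)) \<partial>(lborel::(real\<times>real) measure))
      = (\<integral>\<^sup>+z. ennreal (g1 (fst z) * g2 (snd z)) \<partial>(lborel \<Otimes>\<^sub>M lborel))"
    by (simp add: lborel_prod)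
  also have "\<dots> = (\<integral>\<^sup>+x. \<integral>\<^sup>+y. ennreal (g1 x * g2 y) \<partial>lborel \<partial>lborel)"
    by (subst lborel.nn_integral_fst[symmetric]) auto
  also have "\<dots> = (\<integral>\<^sup>+x. ennreal (g1 x) * (\<integral>\<^sup>+y. ennreal (g2 y) \<partial>lborel) \<partial>lborel)"
    using nn by (simp add: ennreal_mult nn_integral_cmult)
  also have "\<dots> = (\<integral>\<^sup>+x. ennreal (g1 x) \<partial>lborel) * (\<integral>\<^sup>+y. ennreal (g2 y) \<partial>lborel)"
    by (simp add: nn_integral_multc)
  also have "\<dots> = ennreal (integral\<^sup>L lborel g1 * integral\<^sup>L lborel g2)"
    using e1 e2 nn by (simp add: ennreal_mult integral_nonneg_AE)
  finally have nnI: "(\<integral>\<^sup>+z. ennreal (g1 (fst z) * g2 (snd z)) \<partial>(lborel::(real\<times>real) measure))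
      = ennreal (integral\<^sup>L lborel g1 * integral\<^sup>L lborel g2)" .
  have hb: "has_bochner_integral lborel (\<lambda>z::real\<times>real. g1 (fst z) * g2 (snd z)) (integral\<^sup>L lborel g1 * integral\<^sup>L lborel g2)"
    by (rule has_bochner_integral_nn_integral[OF _ _ _ nnI]) (use nn in \<open>auto intro!: integral_nonneg_AE\<close>)
  then show "integrable lborel (\<lambda>z::real\<times>real. g1 (fst z) * g2 (snd z))"
    "(\<integral>z. g1 (fst z) * g2 (snd z) \<partial>(lborel::(real\<times>real) measure)) = integral\<^sup>L lborel g1 * integral\<^sup>L lborel g2"
    by (auto intro: integrable.intros dest: has_bochner_integral_integral_eq)
qed

lemma prod_bound:
  fixes g1 g2 :: "real \<Rightarrow> real" and h :: "real \<times> real \<Rightarrow> real"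
  assumes [measurable]: "g1 \<in> borel_measurable borel" "g2 \<in> borel_measurable borel" "h \<in> borel_measurable borel"
    and i: "integrable lborel g1" "integrable lborel g2"
    and hM: "\<And>z. \<bar>h z\<bar> \<le> M"
  shows "integrable lborel (\<lambda>z::real\<times>real. g1 (fst z) * g2 (snd z) * h z)"
    "\<bar>\<integral>z. g1 (fst z) * g2 (snd z) * h z \<partial>lborel\<bar> \<le> M * (\<integral>s. \<bar>g1 s\<bar> \<partial>lborel) * (\<integral>t. \<bar>g2 t\<bar> \<partial>lborel)"
proof -
  have M0: "0 \<le> M" using hM[of 0] by simp
  note P = prod_integral[of "\<lambda>s. \<bar>g1 s\<bar>" "\<lambda>t. \<bar>g2 t\<bar>"]
  have ip: "integrable lborel (\<lambda>z::real\<times>real. \<bar>g1 (fst z)\<bar> * \<bar>g2 (snd z)\<bar>)"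
    using P i by auto
  have ipM: "integrable lborel (\<lambda>z::real\<times>real. M * (\<bar>g1 (fst z)\<bar> * \<bar>g2 (snd z)\<bar>))"
    using ip by simp
  have bnd: "norm (g1 (fst z) * g2 (snd z) * h z) \<le> norm (M * (\<bar>g1 (fst z)\<bar> * \<bar>g2 (snd z)\<bar>))" for z
  proof -
    have "\<bar>g1 (fst z) * g2 (snd z) * h z\<bar> = (\<bar>g1 (fst z)\<bar> * \<bar>g2 (snd z)\<bar>) * \<bar>h z\<bar>"
      by (simp add: abs_mult)
    also have "\<dots> \<le> (\<bar>g1 (fst z)\<bar> * \<bar>g2 (snd z)\<bar>) * M" using hM by (intro mult_left_mono) auto
    finally show ?thesis using M0 by (simp add: mult.commute abs_mult)
  qed
  show ig: "integrable lborel (\<lambda>z::real\<times>real. g1 (fst z) * g2 (snd z) * h z)"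
    by (rule Bochner_Integration.integrable_bound[OF ipM]) (use bnd in \<open>auto intro!: borel_measurable_times meas_prod\<close>)
  have "\<bar>\<integral>z. g1 (fst z) * g2 (snd z) * h z \<partial>lborel\<bar> \<le> (\<integral>z. M * (\<bar>g1 (fst z)\<bar> * \<bar>g2 (snd z)\<bar>) \<partial>lborel)"
    using Bochner_Integration.integral_norm_bound_integral[OF ig ipM] bnd M0 by (auto simp: abs_mult)
  also have "\<dots> = M * ((\<integral>s. \<bar>g1 s\<bar> \<partial>lborel) * (\<integral>t. \<bar>g2 t\<bar> \<partial>lborel))"
    using P i by simp
  finally show "\<bar>\<integral>z. g1 (fst z) * g2 (snd z) * h z \<partial>lborel\<bar> \<le> M * (\<integral>s. \<bar>g1 s\<bar> \<partial>lborel) * (\<integral>t. \<bar>g2 t\<bar> \<partial>lborel)"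
    by (simp add: mult.assoc)
qed


lemma mem_R: "((s::real), (t::real)) \<in> cbox (a, c) (b, d) \<longleftrightarrow> a \<le> s \<and> s \<le> b \<and> c \<le> t \<and> t \<le> d"
  by (auto simp: cbox_Pair_eq)

definition restr :: "real \<Rightarrow> real \<Rightarrow> real \<Rightarrow> real \<Rightarrow> (real \<times> real \<Rightarrow> real) \<Rightarrow> real \<times> real \<Rightarrow> real" where
  "restr a b c d f z = (if z \<in> cbox (a, c) (b, d) then f z else 0)"

lemma restr_meas:
  assumes "continuous_on (cbox (a, c) (b, d)) f"
  shows "restr a b c d f \<in> borel_measurable borel"
  unfolding restr_def
  by (rule borel_measurable_continuous_on_if) (use assms in \<open>auto intro: continuous_intros\<close>)

lemma restr_bound:
  assumes "continuous_on (cbox (a, c) (b, d)) f"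
  obtains M where "\<And>z. \<bar>restr a b c d f z\<bar> \<le> M"
proof -
  have "compact (f ` cbox (a, c) (b, d))"
    using assms by (intro compact_continuous_image) auto
  then obtain B where B: "\<And>w. w \<in> f ` cbox (a, c) (b, d) \<Longrightarrow> norm w \<le> B"
    using compact_imp_bounded bounded_iff by metis
  have "\<bar>restr a b c d f z\<bar> \<le> max B 0" for z
    using B[of "f z"] by (auto simp: restr_def)
  then show ?thesis using that by blast
qed

definition KI :: "real \<Rightarrow> real \<Rightarrow> real \<Rightarrow> real \<Rightarrow> real \<Rightarrow> real \<Rightarrow> real \<Rightarrow> real \<Rightarrow> (real \<times> real \<Rightarrow> real) \<Rightarrow> real \<Rightarrow> real \<Rightarrow> real" where
  "KI p q a b c d \<alpha> \<beta> f x y = (\<integral>z. kern p \<alpha> a x (fst z) * kern q \<beta> c y (snd z) * restr a b c d f z \<partial>lborel)"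

lemma kat_repr:
  assumes cont: "continuous_on (cbox (a, c) (b, d)) f"
    and xy: "0 < a" "a \<le> x" "x \<le> b" "0 < c" "c \<le> y" "y \<le> d"
    and pq: "-1 < p" "-1 < q" and ab: "0 < \<alpha>" "0 < \<beta>"
  shows "katugampola_mixed p q a c \<alpha> \<beta> f (x, y) =
     (p + 1) powr (1 - \<alpha>) * (q + 1) powr (1 - \<beta>) / (Gamma \<alpha> * Gamma \<beta>) * KI p q a b c d \<alpha> \<beta> f x y"
proof -
  define H where "H z = kern p \<alpha> a x (fst z) * kern q \<beta> c y (snd z) * restr a b c d f z" for z
  obtain M where M: "\<And>z. \<bar>restr a b c d f z\<bar> \<le> M" using restr_bound[OF cont] by blast
  have iH: "integrable lborel H" unfolding H_def
    by (rule prod_bound(1)[OF kern_measurable kern_measurable restr_meas[OF cont]])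
       (use kern_int xy pq ab M in auto)
  have eq1: "(\<lambda>(s, t). (x powr (p + 1) - s powr (p + 1)) powr (\<alpha> - 1) *
                 (y powr (q + 1) - t powr (q + 1)) powr (\<beta> - 1) *
                 s powr p * t powr q * f (s, t)) z = H z" if "z \<in> cbox (a, c) (x, y)" for z
  proof -
    obtain s t where z: "z = (s, t)" by (cases z)
    have st: "a \<le> s" "s \<le> x" "c \<le> t" "t \<le> y" using that z mem_R by auto
    then have "z \<in> cbox (a, c) (b, d)" using z xy mem_R by auto
    then show ?thesis using st z by (simp add: H_def kern_def restr_def)
  qed
  have H0: "H z = 0" if "z \<notin> cbox (a, c) (x, y)" for z
  proof -
    obtain s t where z: "z = (s, t)" by (cases z)
    have "\<not> (a \<le> s \<and> s \<le> x \<and> c \<le> t \<and> t \<le> y)" using that z mem_R by auto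
    then show ?thesis using z by (auto simp: H_def kern_def)
  qed
  have "integral (cbox (a, c) (x, y)) (\<lambda>(s, t). (x powr (p + 1) - s powr (p + 1)) powr (\<alpha> - 1) *
                 (y powr (q + 1) - t powr (q + 1)) powr (\<beta> - 1) *
                 s powr p * t powr q * f (s, t)) = integral (cbox (a, c) (x, y)) H"
    by (rule integral_cong) (use eq1 in auto)
  also have "\<dots> = integral UNIV (\<lambda>z. if z \<in> cbox (a, c) (x, y) then H z else 0)"
    by (rule integral_restrict_UNIV[symmetric])
  also have "(\<lambda>z. if z \<in> cbox (a, c) (x, y) then H z else 0) = H"
    using H0 by auto
  also have "integral UNIV H = integral\<^sup>L lborel H"
    using has_integral_integral_lborel[OF iH] by (rule integral_unique)
  finally show ?thesis unfolding katugampola_mixed_def KI_def H_def by simp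
qed


lemma kern_int_bound:
  assumes "0 < a" "a \<le> x" "x \<le> b" "-1 < p" "0 < \<alpha>"
  shows "(\<integral>s. \<bar>kern p \<alpha> a x s\<bar> \<partial>lborel) \<le> (b powr (p+1)) powr \<alpha> / (\<alpha>*(p+1))"
proof -
  have "(\<integral>s. \<bar>kern p \<alpha> a x s\<bar> \<partial>lborel) = integral\<^sup>L lborel (kern p \<alpha> a x)"
    using kern_nonneg by simp
  also have "\<dots> = (x powr (p+1) - a powr (p+1)) powr \<alpha> / (\<alpha>*(p+1))"
    using kern_int assms by simp
  also have "\<dots> \<le> (b powr (p+1)) powr \<alpha> / (\<alpha>*(p+1))"
  proof -
    have e: "0 < p + 1" using assms by simp
    have "a powr (p+1) \<le> x powr (p+1)" "x powr (p+1) \<le> b powr (p+1)"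
      using assms e by (auto intro: powr_mono2)
    moreover have "0 \<le> a powr (p+1)" by simp
    ultimately have "x powr (p+1) - a powr (p+1) \<le> b powr (p+1)" by linarith
    then have "(x powr (p+1) - a powr (p+1)) powr \<alpha> \<le> (b powr (p+1)) powr \<alpha>"
      using assms \<open>a powr (p+1) \<le> x powr (p+1)\<close> by (intro powr_mono2) auto
    then show ?thesis using assms e by (intro divide_right_mono) auto
  qed
  finally show ?thesis .
qed

lemma KI_x_diff:
  assumes cont: "continuous_on (cbox (a, c) (b, d)) f"
    and M: "\<And>z. \<bar>restr a b c d f z\<bar> \<le> M"
    and xy: "0 < a" "a \<le> x" "x \<le> x'" "x' \<le> b" "0 < c" "c \<le> y" "y \<le> d"
    and pq: "-1 < p" "p \<le> 0" "-1 < q" and ab: "0 < \<alpha>" "0 < \<beta>"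
  shows "\<bar>KI p q a b c d \<alpha> \<beta> f x' y - KI p q a b c d \<alpha> \<beta> f x y\<bar>
     \<le> M * (Ck p \<alpha> a b * (x' - x) powr (min \<alpha> 1)) * ((d powr (q+1)) powr \<beta> / (\<beta>*(q+1)))"
proof -
  have M0: "0 \<le> M" using M[of 0] by simp
  note rm = restr_meas[OF cont]
  have i1: "integrable lborel (\<lambda>z. kern p \<alpha> a x' (fst z) * kern q \<beta> c y (snd z) * restr a b c d f z)"
    by (rule prod_bound(1)[OF kern_measurable kern_measurable rm]) (use kern_int xy pq ab M in auto)
  have i2: "integrable lborel (\<lambda>z. kern p \<alpha> a x (fst z) * kern q \<beta> c y (snd z) * restr a b c d f z)"
    by (rule prod_bound(1)[OF kern_measurable kern_measurable rm]) (use kern_int xy pq ab M in auto)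
  have gm: "(\<lambda>s. kern p \<alpha> a x' s - kern p \<alpha> a x s) \<in> borel_measurable borel" by measurable
  have gi: "integrable lborel (\<lambda>s. kern p \<alpha> a x' s - kern p \<alpha> a x s)"
    using kern_int xy pq ab by (intro Bochner_Integration.integrable_diff) auto
  have eq: "KI p q a b c d \<alpha> \<beta> f x' y - KI p q a b c d \<alpha> \<beta> f x y =
     (\<integral>z. (kern p \<alpha> a x' (fst z) - kern p \<alpha> a x (fst z)) * kern q \<beta> c y (snd z) * restr a b c d f z \<partial>lborel)"
    unfolding KI_def Bochner_Integration.integral_diff[OF i1 i2, symmetric]
    by (rule Bochner_Integration.integral_cong) (simp_all add: algebra_simps)
  have bnd: "\<bar>(\<integral>z. (kern p \<alpha> a x' (fst z) - kern p \<alpha> a x (fst z)) * kern q \<beta> c y (snd z) * restr a b c d f z \<partial>lborel)\<bar> \<le> M * (\<integral>s. \<bar>kern p \<alpha> a x' s - kern p \<alpha> a x s\<bar> \<partial>lborel) * (\<integral>t. \<bar>kern q \<beta> c y t\<bar> \<partial>lborel)"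
    by (rule prod_bound(2)[OF gm kern_measurable rm gi]) (use kern_int xy pq ab M in auto)
  have bnd2: "M * (\<integral>s. \<bar>kern p \<alpha> a x' s - kern p \<alpha> a x s\<bar> \<partial>lborel) * (\<integral>t. \<bar>kern q \<beta> c y t\<bar> \<partial>lborel) \<le> M * (Ck p \<alpha> a b * (x' - x) powr (min \<alpha> 1)) * ((d powr (q+1)) powr \<beta> / (\<beta>*(q+1)))"
  proof -
    have A: "(\<integral>s. \<bar>kern p \<alpha> a x' s - kern p \<alpha> a x s\<bar> \<partial>lborel) \<le> Ck p \<alpha> a b * (x' - x) powr (min \<alpha> 1)"
      using kern_abs_diff(2)[of a x x' b p \<alpha>] xy pq ab by simp
    have B: "(\<integral>t. \<bar>kern q \<beta> c y t\<bar> \<partial>lborel) \<le> (d powr (q+1)) powr \<beta> / (\<beta>*(q+1))"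
      using kern_int_bound xy pq ab by simp
    have A0: "0 \<le> (\<integral>s. \<bar>kern p \<alpha> a x' s - kern p \<alpha> a x s\<bar> \<partial>lborel)" by simp
    have B0: "0 \<le> (\<integral>t. \<bar>kern q \<beta> c y t\<bar> \<partial>lborel)" by simp
    have Ab0: "0 \<le> Ck p \<alpha> a b * (x' - x) powr (min \<alpha> 1)" using A0 A by linarith
    show ?thesis using mult_left_mono[OF mult_mono[OF A B Ab0 B0] M0] by (simp add: mult.assoc)
  qed
  show ?thesis unfolding eq using bnd bnd2 by linarith
qed

lemma KI_y_diff:
  assumes cont: "continuous_on (cbox (a, c) (b, d)) f"
    and M: "\<And>z. \<bar>restr a b c d f z\<bar> \<le> M"
    and xy: "0 < a" "a \<le> x" "x \<le> b" "0 < c" "c \<le> y" "y \<le> y'" "y' \<le> d"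
    and pq: "-1 < p" "-1 < q" "q \<le> 0" and ab: "0 < \<alpha>" "0 < \<beta>"
  shows "\<bar>KI p q a b c d \<alpha> \<beta> f x y' - KI p q a b c d \<alpha> \<beta> f x y\<bar>
     \<le> M * ((b powr (p+1)) powr \<alpha> / (\<alpha>*(p+1))) * (Ck q \<beta> c d * (y' - y) powr (min \<beta> 1))"
proof -
  have M0: "0 \<le> M" using M[of 0] by simp
  note rm = restr_meas[OF cont]
  have i1: "integrable lborel (\<lambda>z. kern p \<alpha> a x (fst z) * kern q \<beta> c y' (snd z) * restr a b c d f z)"
    by (rule prod_bound(1)[OF kern_measurable kern_measurable rm]) (use kern_int xy pq ab M in auto)
  have i2: "integrable lborel (\<lambda>z. kern p \<alpha> a x (fst z) * kern q \<beta> c y (snd z) * restr a b c d f z)"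
    by (rule prod_bound(1)[OF kern_measurable kern_measurable rm]) (use kern_int xy pq ab M in auto)
  have gm: "(\<lambda>s. kern q \<beta> c y' s - kern q \<beta> c y s) \<in> borel_measurable borel" by measurable
  have gi: "integrable lborel (\<lambda>s. kern q \<beta> c y' s - kern q \<beta> c y s)"
    using kern_int xy pq ab by (intro Bochner_Integration.integrable_diff) auto
  have eq: "KI p q a b c d \<alpha> \<beta> f x y' - KI p q a b c d \<alpha> \<beta> f x y =
     (\<integral>z. kern p \<alpha> a x (fst z) * (kern q \<beta> c y' (snd z) - kern q \<beta> c y (snd z)) * restr a b c d f z \<partial>lborel)"
    unfolding KI_def Bochner_Integration.integral_diff[OF i1 i2, symmetric]
    by (rule Bochner_Integration.integral_cong) (simp_all add: algebra_simps)
  have bnd: "\<bar>(\<integral>z. kern p \<alpha> a x (fst z) * (kern q \<beta> c y' (snd z) - kern q \<beta> c y (snd z)) * restr a b c d f z \<partial>lborel)\<bar> \<le> M * (\<integral>s. \<bar>kern p \<alpha> a x s\<bar> \<partial>lborel) * (\<integral>t. \<bar>kern q \<beta> c y' t - kern q \<beta> c y t\<bar> \<partial>lborel)"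
    by (rule prod_bound(2)[OF kern_measurable gm rm _ gi]) (use kern_int xy pq ab M in auto)
  have bnd2: "M * (\<integral>s. \<bar>kern p \<alpha> a x s\<bar> \<partial>lborel) * (\<integral>t. \<bar>kern q \<beta> c y' t - kern q \<beta> c y t\<bar> \<partial>lborel) \<le> M * ((b powr (p+1)) powr \<alpha> / (\<alpha>*(p+1))) * (Ck q \<beta> c d * (y' - y) powr (min \<beta> 1))"
  proof -
    have A: "(\<integral>s. \<bar>kern q \<beta> c y' s - kern q \<beta> c y s\<bar> \<partial>lborel) \<le> Ck q \<beta> c d * (y' - y) powr (min \<beta> 1)"
      using kern_abs_diff(2)[of c y y' d q \<beta>] xy pq ab by simp
    have B: "(\<integral>t. \<bar>kern p \<alpha> a x t\<bar> \<partial>lborel) \<le> (b powr (p+1)) powr \<alpha> / (\<alpha>*(p+1))"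
      using kern_int_bound xy pq ab by simp
    have A0: "0 \<le> (\<integral>s. \<bar>kern q \<beta> c y' s - kern q \<beta> c y s\<bar> \<partial>lborel)" by simp
    have B0: "0 \<le> (\<integral>t. \<bar>kern p \<alpha> a x t\<bar> \<partial>lborel)" by simp
    have Ab0: "0 \<le> Ck q \<beta> c d * (y' - y) powr (min \<beta> 1)" using A0 A by linarith
    have Bb0: "0 \<le> (b powr (p+1)) powr \<alpha> / (\<alpha>*(p+1))" using B0 B by linarith
    show ?thesis using mult_left_mono[OF mult_mono[OF B A Bb0 A0] M0] by (simp add: mult.assoc)
  qed
  show ?thesis unfolding eq using bnd bnd2 by linarith
qed


lemma pow_compare:
  fixes t r D \<gamma> \<gamma>1 :: real
  assumes "0 \<le> t" "t \<le> r" "r \<le> D" "0 < \<gamma>" "\<gamma> \<le> \<gamma>1"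
  shows "t powr \<gamma>1 \<le> (max 1 D) powr (\<gamma>1 - \<gamma>) * r powr \<gamma>"
proof (cases "r = 0")
  case True then show ?thesis using assms by simp
next
  case False
  then have r0: "0 < r" using assms by simp
  have "t powr \<gamma>1 \<le> r powr \<gamma>1" using assms by (intro powr_mono2) auto
  also have "\<dots> = r powr (\<gamma>1 - \<gamma>) * r powr \<gamma>" by (simp add: powr_add[symmetric])
  also have "\<dots> \<le> (max 1 D) powr (\<gamma>1 - \<gamma>) * r powr \<gamma>"
    using assms r0 by (intro mult_right_mono powr_mono2) auto
  finally show ?thesis .
qed

lemma dist_R_bound:
  assumes "P \<in> cbox (a, c) (b, d)" "Q \<in> cbox (a, c) (b, d)"
  shows "dist P Q \<le> (b - a) + (d - (c::real))"
proof -
  obtain x y x' y' where P: "P = (x, y)" and Q: "Q = (x', y')" by (cases P, cases Q) auto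
  have "dist P Q = sqrt ((x - x')\<^sup>2 + (y - y')\<^sup>2)" using P Q by (simp add: dist_Pair_Pair dist_real_def)
  also have "\<dots> \<le> \<bar>x - x'\<bar> + \<bar>y - y'\<bar>" by (rule sqrt_sum_squares_le_sum_abs)
  also have "\<dots> \<le> (b - a) + (d - c)" using assms P Q mem_R by auto
  finally show ?thesis .
qed

lemma kat_holder:
  fixes f :: "real \<times> real \<Rightarrow> real" and a b c d p q \<alpha> \<beta> :: real
  assumes cont: "continuous_on (cbox (a, c) (b, d)) f"
    and "0 < a" "a < b" "0 < c" "c < d"
    and "-1 < p" "p \<le> 0" "-1 < q" "q \<le> 0" and ab: "0 < \<alpha>" "0 < \<beta>"
  shows "\<exists>L>0. \<forall>P\<in>cbox (a, c) (b, d). \<forall>Q\<in>cbox (a, c) (b, d).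
     \<bar>katugampola_mixed p q a c \<alpha> \<beta> f P - katugampola_mixed p q a c \<alpha> \<beta> f Q\<bar>
       \<le> L * dist P Q powr (min (min \<alpha> 1) (min \<beta> 1))"
proof -
  define C0 where "C0 = (p + 1) powr (1 - \<alpha>) * (q + 1) powr (1 - \<beta>) / (Gamma \<alpha> * Gamma \<beta>)"
  define \<gamma> where "\<gamma> = min (min \<alpha> 1) (min \<beta> 1)"
  define Dm where "Dm = (b - a) + (d - c)"
  obtain M where M: "\<And>z. \<bar>restr a b c d f z\<bar> \<le> M" using restr_bound[OF cont] by blast
  define A1 where "A1 = M * Ck p \<alpha> a b * ((d powr (q+1)) powr \<beta> / (\<beta>*(q+1)))"
  define A2 where "A2 = M * ((b powr (p+1)) powr \<alpha> / (\<alpha>*(p+1))) * Ck q \<beta> c d"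
  define L where "L = \<bar>C0\<bar> * (\<bar>A1\<bar> * (max 1 Dm) powr (min \<alpha> 1 - \<gamma>) + \<bar>A2\<bar> * (max 1 Dm) powr (min \<beta> 1 - \<gamma>)) + 1"
  have g0: "0 < \<gamma>" using ab by (simp add: \<gamma>_def)
  have L0: "0 < L" unfolding L_def by (intro add_nonneg_pos mult_nonneg_nonneg add_nonneg_nonneg) auto
  have KX: "\<bar>KI p q a b c d \<alpha> \<beta> f x y - KI p q a b c d \<alpha> \<beta> f x' y\<bar> \<le> \<bar>A1\<bar> * \<bar>x - x'\<bar> powr (min \<alpha> 1)"
    if "a \<le> x" "x \<le> b" "a \<le> x'" "x' \<le> b" "c \<le> y" "y \<le> d" for x x' y
  proof (cases "x \<le> x'")
    case True
    have "\<bar>KI p q a b c d \<alpha> \<beta> f x' y - KI p q a b c d \<alpha> \<beta> f x y\<bar> \<le> M * (Ck p \<alpha> a b * (x' - x) powr (min \<alpha> 1)) * ((d powr (q+1)) powr \<beta> / (\<beta>*(q+1)))"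
      by (rule KI_x_diff[OF cont M]) (use that True assms in auto)
    also have "\<dots> = A1 * (x' - x) powr (min \<alpha> 1)" unfolding A1_def by (simp add: mult_ac)
    also have "\<dots> \<le> \<bar>A1\<bar> * \<bar>x - x'\<bar> powr (min \<alpha> 1)"
    proof -
      have e: "\<bar>x - x'\<bar> = x' - x" using True by simp
      show ?thesis unfolding e by (rule mult_right_mono) auto
    qed
    finally show ?thesis by (simp add: abs_minus_commute)
  next
    case False
    have "\<bar>KI p q a b c d \<alpha> \<beta> f x y - KI p q a b c d \<alpha> \<beta> f x' y\<bar> \<le> M * (Ck p \<alpha> a b * (x - x') powr (min \<alpha> 1)) * ((d powr (q+1)) powr \<beta> / (\<beta>*(q+1)))"
      by (rule KI_x_diff[OF cont M]) (use that False assms in auto)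
    also have "\<dots> = A1 * (x - x') powr (min \<alpha> 1)" unfolding A1_def by (simp add: mult_ac)
    also have "\<dots> \<le> \<bar>A1\<bar> * \<bar>x - x'\<bar> powr (min \<alpha> 1)"
    proof -
      have e: "\<bar>x - x'\<bar> = x - x'" using False by simp
      show ?thesis unfolding e by (rule mult_right_mono) auto
    qed
    finally show ?thesis .
  qed
  have KY: "\<bar>KI p q a b c d \<alpha> \<beta> f x y - KI p q a b c d \<alpha> \<beta> f x y'\<bar> \<le> \<bar>A2\<bar> * \<bar>y - y'\<bar> powr (min \<beta> 1)"
    if "a \<le> x" "x \<le> b" "c \<le> y'" "y' \<le> d" "c \<le> y" "y \<le> d" for x y y'
  proof (cases "y \<le> y'")
    case True
    have "\<bar>KI p q a b c d \<alpha> \<beta> f x y' - KI p q a b c d \<alpha> \<beta> f x y\<bar> \<le> M * ((b powr (p+1)) powr \<alpha> / (\<alpha>*(p+1))) * (Ck q \<beta> c d * (y' - y) powr (min \<beta> 1))"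
      by (rule KI_y_diff[OF cont M]) (use that True assms in auto)
    also have "\<dots> = A2 * (y' - y) powr (min \<beta> 1)" unfolding A2_def by (simp add: mult_ac)
    also have "\<dots> \<le> \<bar>A2\<bar> * \<bar>y - y'\<bar> powr (min \<beta> 1)"
    proof -
      have e: "\<bar>y - y'\<bar> = y' - y" using True by simp
      show ?thesis unfolding e by (rule mult_right_mono) auto
    qed
    finally show ?thesis by (simp add: abs_minus_commute)
  next
    case False
    have "\<bar>KI p q a b c d \<alpha> \<beta> f x y - KI p q a b c d \<alpha> \<beta> f x y'\<bar> \<le> M * ((b powr (p+1)) powr \<alpha> / (\<alpha>*(p+1))) * (Ck q \<beta> c d * (y - y') powr (min \<beta> 1))"
      by (rule KI_y_diff[OF cont M]) (use that False assms in auto)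
    also have "\<dots> = A2 * (y - y') powr (min \<beta> 1)" unfolding A2_def by (simp add: mult_ac)
    also have "\<dots> \<le> \<bar>A2\<bar> * \<bar>y - y'\<bar> powr (min \<beta> 1)"
    proof -
      have e: "\<bar>y - y'\<bar> = y - y'" using False by simp
      show ?thesis unfolding e by (rule mult_right_mono) auto
    qed
    finally show ?thesis .
  qed
  have "\<bar>katugampola_mixed p q a c \<alpha> \<beta> f P - katugampola_mixed p q a c \<alpha> \<beta> f Q\<bar> \<le> L * dist P Q powr \<gamma>"
    if P: "P \<in> cbox (a, c) (b, d)" and Q: "Q \<in> cbox (a, c) (b, d)" for P Q
  proof -
    obtain x y x' y' where PQ: "P = (x, y)" "Q = (x', y')" by (cases P, cases Q) auto
    have r: "a \<le> x" "x \<le> b" "c \<le> y" "y \<le> d" "a \<le> x'" "x' \<le> b" "c \<le> y'" "y' \<le> d"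
      using P Q PQ mem_R by auto
    have gP: "katugampola_mixed p q a c \<alpha> \<beta> f P = C0 * KI p q a b c d \<alpha> \<beta> f x y"
      unfolding C0_def PQ by (rule kat_repr[OF cont]) (use r assms in auto)
    have gQ: "katugampola_mixed p q a c \<alpha> \<beta> f Q = C0 * KI p q a b c d \<alpha> \<beta> f x' y'"
      unfolding C0_def PQ by (rule kat_repr[OF cont]) (use r assms in auto)
    have dx: "\<bar>x - x'\<bar> \<le> dist P Q" using dist_fst_le[of P Q] PQ by (simp add: dist_real_def)
    have dy: "\<bar>y - y'\<bar> \<le> dist P Q" using dist_snd_le[of P Q] PQ by (simp add: dist_real_def)
    have dD: "dist P Q \<le> Dm" unfolding Dm_def by (rule dist_R_bound[OF P Q])
    have px: "\<bar>x - x'\<bar> powr (min \<alpha> 1) \<le> (max 1 Dm) powr (min \<alpha> 1 - \<gamma>) * dist P Q powr \<gamma>"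
      by (rule pow_compare) (use dx dD g0 in \<open>auto simp: \<gamma>_def\<close>)
    have py: "\<bar>y - y'\<bar> powr (min \<beta> 1) \<le> (max 1 Dm) powr (min \<beta> 1 - \<gamma>) * dist P Q powr \<gamma>"
      by (rule pow_compare) (use dy dD g0 in \<open>auto simp: \<gamma>_def\<close>)
    have "\<bar>KI p q a b c d \<alpha> \<beta> f x y - KI p q a b c d \<alpha> \<beta> f x' y'\<bar>
        \<le> \<bar>KI p q a b c d \<alpha> \<beta> f x y - KI p q a b c d \<alpha> \<beta> f x' y\<bar> + \<bar>KI p q a b c d \<alpha> \<beta> f x' y - KI p q a b c d \<alpha> \<beta> f x' y'\<bar>"
      by linarith
    also have "\<dots> \<le> \<bar>A1\<bar> * \<bar>x - x'\<bar> powr (min \<alpha> 1) + \<bar>A2\<bar> * \<bar>y - y'\<bar> powr (min \<beta> 1)"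
      using KX[of x x' y] KY[of x' y' y] r by (intro add_mono) auto
    also have "\<dots> \<le> \<bar>A1\<bar> * ((max 1 Dm) powr (min \<alpha> 1 - \<gamma>) * dist P Q powr \<gamma>) + \<bar>A2\<bar> * ((max 1 Dm) powr (min \<beta> 1 - \<gamma>) * dist P Q powr \<gamma>)"
      using px py by (intro add_mono mult_left_mono) auto
    also have "\<dots> = (\<bar>A1\<bar> * (max 1 Dm) powr (min \<alpha> 1 - \<gamma>) + \<bar>A2\<bar> * (max 1 Dm) powr (min \<beta> 1 - \<gamma>)) * dist P Q powr \<gamma>"
      by (simp add: algebra_simps)
    finally have K: "\<bar>KI p q a b c d \<alpha> \<beta> f x y - KI p q a b c d \<alpha> \<beta> f x' y'\<bar> \<le> (\<bar>A1\<bar> * (max 1 Dm) powr (min \<alpha> 1 - \<gamma>) + \<bar>A2\<bar> * (max 1 Dm) powr (min \<beta> 1 - \<gamma>)) * dist P Q powr \<gamma>" .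
    have "\<bar>katugampola_mixed p q a c \<alpha> \<beta> f P - katugampola_mixed p q a c \<alpha> \<beta> f Q\<bar>
        = \<bar>C0\<bar> * \<bar>KI p q a b c d \<alpha> \<beta> f x y - KI p q a b c d \<alpha> \<beta> f x' y'\<bar>"
      unfolding gP gQ by (simp add: abs_mult right_diff_distrib[symmetric])
    also have "\<dots> \<le> \<bar>C0\<bar> * ((\<bar>A1\<bar> * (max 1 Dm) powr (min \<alpha> 1 - \<gamma>) + \<bar>A2\<bar> * (max 1 Dm) powr (min \<beta> 1 - \<gamma>)) * dist P Q powr \<gamma>)"
      using K by (intro mult_left_mono) auto
    also have "\<dots> \<le> L * dist P Q powr \<gamma>"
      unfolding L_def by (simp add: algebra_simps)
    finally show ?thesis .
  qed
  then show ?thesis using L0 unfolding \<gamma>_def by blast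
qed


lemma floor_close:
  fixes u v :: real
  assumes "\<lfloor>u\<rfloor> = \<lfloor>v\<rfloor>"
  shows "\<bar>u - v\<bar> < 1"
proof -
  have "of_int \<lfloor>u\<rfloor> \<le> u" "u < of_int \<lfloor>u\<rfloor> + 1" "of_int \<lfloor>v\<rfloor> \<le> v" "v < of_int \<lfloor>v\<rfloor> + 1"
    by linarith+
  then show ?thesis using assms by linarith
qed

lemma floor_diff_le:
  fixes u v T :: real and m :: int
  assumes "\<bar>u - v\<bar> \<le> T" "T \<le> of_int m"
  shows "\<bar>\<lfloor>u\<rfloor> - \<lfloor>v\<rfloor>\<bar> \<le> m"
proof -
  have "of_int \<lfloor>u\<rfloor> \<le> u" "u < of_int \<lfloor>u\<rfloor> + 1" "of_int \<lfloor>v\<rfloor> \<le> v" "v < of_int \<lfloor>v\<rfloor> + 1"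
    by linarith+
  note fl = this
  have h: "u - v \<le> T" "v - u \<le> T" using assms(1) by linarith+
  have "real_of_int \<lfloor>u\<rfloor> - real_of_int \<lfloor>v\<rfloor> < real_of_int m + 1"
       "real_of_int \<lfloor>v\<rfloor> - real_of_int \<lfloor>u\<rfloor> < real_of_int m + 1"
    using fl h assms(2) by linarith+
  then have "real_of_int (\<lfloor>u\<rfloor> - \<lfloor>v\<rfloor>) < real_of_int (m + 1)"
      "real_of_int (\<lfloor>v\<rfloor> - \<lfloor>u\<rfloor>) < real_of_int (m + 1)" by simp_all
  then have "\<lfloor>u\<rfloor> - \<lfloor>v\<rfloor> < m + 1" "\<lfloor>v\<rfloor> - \<lfloor>u\<rfloor> < m + 1" by (simp_all only: of_int_less_iff)
  then show ?thesis by linarith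
qed

lemma sq_le:
  fixes u \<eta> :: real
  assumes "\<bar>u\<bar> < \<eta>"
  shows "u\<^sup>2 \<le> \<eta>\<^sup>2"
proof -
  have "\<bar>u\<bar> \<le> \<bar>\<eta>\<bar>" using assms by linarith
  then show ?thesis by (simp add: abs_le_square_iff)
qed

lemma dist3:
  fixes P Q :: "(real \<times> real) \<times> real"
  shows "dist P Q = sqrt ((fst (fst P) - fst (fst Q))\<^sup>2 + (snd (fst P) - snd (fst Q))\<^sup>2 + (snd P - snd Q)\<^sup>2)"
proof -
  obtain x y z x' y' z' where P: "P = ((x, y), z)" and Q: "Q = ((x', y'), z')"
    by (metis prod.collapse)
  show ?thesis using P Q by (simp add: dist_Pair_Pair dist_real_def)
qed

locale holder_graph =
  fixes a b c d :: real and g :: "real \<times> real \<Rightarrow> real" and L \<gamma> :: real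
  assumes ab: "a < b" "c < d"
    and gam: "0 < \<gamma>" "\<gamma> \<le> 1" and L: "0 < L"
    and hold: "\<And>P Q. P \<in> cbox (a, c) (b, d) \<Longrightarrow> Q \<in> cbox (a, c) (b, d) \<Longrightarrow>
        \<bar>g P - g Q\<bar> \<le> L * dist P Q powr \<gamma>"
begin

abbreviation "G \<equiv> graph_on a b c d g"

lemma mem_G: "z \<in> G \<longleftrightarrow> fst (fst z) \<in> {a..b} \<and> snd (fst z) \<in> {c..d} \<and> snd z = g (fst z)"
  unfolding graph_on_def by (cases z) auto

lemma G_ne: "G \<noteq> {}"
  using mem_G[of "((a, c), g (a, c))"] ab by auto

lemma fstR: "z \<in> G \<Longrightarrow> fst z \<in> cbox (a, c) (b, d)"
  using mem_G[of z] by (cases "fst z") (auto simp: cbox_Pair_eq)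

lemma G_bounded: "bounded G"
proof -
  define B where "B = \<bar>g (a, c)\<bar> + L * ((b - a) + (d - c)) powr \<gamma>"
  have gb: "\<bar>g P\<bar> \<le> B" if "P \<in> cbox (a, c) (b, d)" for P
  proof -
    have ac: "(a, c) \<in> cbox (a, c) (b, d)" using ab by (auto simp: cbox_Pair_eq)
    obtain x y where P: "P = (x, y)" by (cases P)
    have r: "a \<le> x" "x \<le> b" "c \<le> y" "y \<le> d" using that P by (auto simp: cbox_Pair_eq)
    have "dist P (a, c) = sqrt ((x - a)\<^sup>2 + (y - c)\<^sup>2)" using P by (simp add: dist_Pair_Pair dist_real_def)
    also have "\<dots> \<le> \<bar>x - a\<bar> + \<bar>y - c\<bar>" by (rule sqrt_sum_squares_le_sum_abs)
    also have "\<dots> \<le> (b - a) + (d - c)" using r by auto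
    finally have "dist P (a, c) powr \<gamma> \<le> ((b - a) + (d - c)) powr \<gamma>" using gam by (intro powr_mono2) auto
    then have "L * dist P (a, c) powr \<gamma> \<le> L * ((b - a) + (d - c)) powr \<gamma>" using L by simp
    then show ?thesis using hold[OF that ac] unfolding B_def by linarith
  qed
  have "G \<subseteq> cbox ((a, c), - B) ((b, d), B)"
  proof
    fix z assume "z \<in> G"
    then have "fst z \<in> cbox (a, c) (b, d)" "snd z = g (fst z)" using fstR mem_G by auto
    then show "z \<in> cbox ((a, c), - B) ((b, d), B)" using gb[of "fst z"]
      by (cases z) (auto simp: cbox_Pair_eq abs_le_iff)
  qed
  then show ?thesis using bounded_cbox bounded_subset by blast
qed

end


context holder_graph
begin

definition cellU :: "real \<Rightarrow> int \<Rightarrow> int \<Rightarrow> int \<Rightarrow> ((real \<times> real) \<times> real) set" where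
  "cellU \<eta> i j k = {P \<in> G. \<lfloor>(fst (fst P) - a) / \<eta>\<rfloor> = i \<and> \<lfloor>(snd (fst P) - c) / \<eta>\<rfloor> = j \<and> \<lfloor>snd P / \<eta>\<rfloor> = k}"

lemma cell_close:
  assumes "0 < \<eta>" "P \<in> cellU \<eta> i j k" "Q \<in> cellU \<eta> i j k'"
  shows "\<bar>fst (fst P) - fst (fst Q)\<bar> < \<eta>" "\<bar>snd (fst P) - snd (fst Q)\<bar> < \<eta>"
proof -
  have "\<bar>(fst (fst P) - a) / \<eta> - (fst (fst Q) - a) / \<eta>\<bar> < 1"
    using assms by (intro floor_close) (auto simp: cellU_def)
  then show "\<bar>fst (fst P) - fst (fst Q)\<bar> < \<eta>" using assms(1)
    by (simp add: diff_divide_distrib[symmetric] abs_divide)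
  have "\<bar>(snd (fst P) - c) / \<eta> - (snd (fst Q) - c) / \<eta>\<bar> < 1"
    using assms by (intro floor_close) (auto simp: cellU_def)
  then show "\<bar>snd (fst P) - snd (fst Q)\<bar> < \<eta>" using assms(1)
    by (simp add: diff_divide_distrib[symmetric] abs_divide)
qed

lemma cell_diam:
  assumes "0 < \<eta>" "P \<in> cellU \<eta> i j k" "Q \<in> cellU \<eta> i j k"
  shows "dist P Q \<le> 2 * \<eta>"
proof -
  note cc = cell_close[OF assms]
  have "\<bar>snd P / \<eta> - snd Q / \<eta>\<bar> < 1"
    using assms by (intro floor_close) (auto simp: cellU_def)
  then have cz: "\<bar>snd P - snd Q\<bar> < \<eta>" using assms(1)
    by (simp add: diff_divide_distrib[symmetric] abs_divide)
  have "(fst (fst P) - fst (fst Q))\<^sup>2 \<le> \<eta>\<^sup>2" "(snd (fst P) - snd (fst Q))\<^sup>2 \<le> \<eta>\<^sup>2" "(snd P - snd Q)\<^sup>2 \<le> \<eta>\<^sup>2"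
    using sq_le cc cz by blast+
  then have "(fst (fst P) - fst (fst Q))\<^sup>2 + (snd (fst P) - snd (fst Q))\<^sup>2 + (snd P - snd Q)\<^sup>2 \<le> 4 * \<eta>\<^sup>2"
    using zero_le_power2[of \<eta>] by linarith
  then have "(fst (fst P) - fst (fst Q))\<^sup>2 + (snd (fst P) - snd (fst Q))\<^sup>2 + (snd P - snd Q)\<^sup>2 \<le> (2 * \<eta>)\<^sup>2"
    by (simp add: power_mult_distrib)
  then have "sqrt ((fst (fst P) - fst (fst Q))\<^sup>2 + (snd (fst P) - snd (fst Q))\<^sup>2 + (snd P - snd Q)\<^sup>2) \<le> 2 * \<eta>"
    using assms(1) by (intro real_le_lsqrt) auto
  then show ?thesis by (simp add: dist3)
qed

lemma cell_k:
  assumes "0 < \<eta>" "P \<in> cellU \<eta> i j k" "Q \<in> cellU \<eta> i j k'"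
  shows "\<bar>k - k'\<bar> \<le> \<lceil>L * (2 * \<eta>) powr \<gamma> / \<eta>\<rceil>"
proof -
  note cc = cell_close[OF assms]
  have PG: "P \<in> G" "Q \<in> G" using assms by (auto simp: cellU_def)
  have "dist (fst P) (fst Q) = sqrt ((fst (fst P) - fst (fst Q))\<^sup>2 + (snd (fst P) - snd (fst Q))\<^sup>2)"
    using dist_Pair_Pair[of "fst (fst P)" "snd (fst P)" "fst (fst Q)" "snd (fst Q)"] by (simp add: dist_real_def)
  also have "\<dots> \<le> \<bar>fst (fst P) - fst (fst Q)\<bar> + \<bar>snd (fst P) - snd (fst Q)\<bar>"
    by (rule sqrt_sum_squares_le_sum_abs)
  also have "\<dots> \<le> 2 * \<eta>" using cc by simp
  finally have dPQ: "dist (fst P) (fst Q) \<le> 2 * \<eta>" .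
  have "\<bar>snd P - snd Q\<bar> = \<bar>g (fst P) - g (fst Q)\<bar>" using PG mem_G by auto
  also have "\<dots> \<le> L * dist (fst P) (fst Q) powr \<gamma>" using hold fstR PG by auto
  also have "\<dots> \<le> L * (2 * \<eta>) powr \<gamma>" using dPQ L gam by (intro mult_left_mono powr_mono2) auto
  finally have "\<bar>snd P - snd Q\<bar> \<le> L * (2 * \<eta>) powr \<gamma>" .
  then have "\<bar>snd P / \<eta> - snd Q / \<eta>\<bar> \<le> L * (2 * \<eta>) powr \<gamma> / \<eta>"
    using assms(1) by (simp add: diff_divide_distrib[symmetric] abs_divide divide_right_mono)
  then have "\<bar>\<lfloor>snd P / \<eta>\<rfloor> - \<lfloor>snd Q / \<eta>\<rfloor>\<bar> \<le> \<lceil>L * (2 * \<eta>) powr \<gamma> / \<eta>\<rceil>"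
    by (intro floor_diff_le) auto
  then show ?thesis using assms by (simp add: cellU_def)
qed

end


lemma numeric_bound:
  fixes \<delta> W L \<gamma> :: real
  assumes d: "0 < \<delta>" "\<delta> \<le> 1" and W: "0 \<le> W" and L: "0 < L" and g: "0 < \<gamma>" "\<gamma> \<le> 1"
  shows "(W / (\<delta>/2) + 2)\<^sup>2 * (2 * (L * (2 * (\<delta>/2)) powr \<gamma> / (\<delta>/2)) + 3)
      \<le> (2*W+2)\<^sup>2 * (4*L+3) * \<delta> powr (\<gamma> - 3)"
proof -
  have e1: "W / (\<delta>/2) + 2 \<le> (2*W+2) / \<delta>"
    using d by (simp add: field_simps)
  have e1': "(W / (\<delta>/2) + 2)\<^sup>2 \<le> ((2*W+2) / \<delta>)\<^sup>2"
    using e1 W d by (intro power_mono) (auto intro: add_nonneg_nonneg divide_nonneg_pos)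
  have dg: "1 \<le> \<delta> powr \<gamma> / \<delta>"
  proof -
    have "\<delta> powr 1 \<le> \<delta> powr \<gamma>" using d g by (intro powr_mono') auto
    then show ?thesis using d by simp
  qed
  have e2: "2 * (L * (2 * (\<delta>/2)) powr \<gamma> / (\<delta>/2)) + 3 \<le> (4*L+3) * (\<delta> powr \<gamma> / \<delta>)"
  proof -
    have "2 * (L * (2 * (\<delta>/2)) powr \<gamma> / (\<delta>/2)) = 4 * L * (\<delta> powr \<gamma> / \<delta>)" by simp
    moreover have "3 \<le> 3 * (\<delta> powr \<gamma> / \<delta>)" using dg by simp
    ultimately show ?thesis by (simp add: algebra_simps)
  qed
  have "(W / (\<delta>/2) + 2)\<^sup>2 * (2 * (L * (2 * (\<delta>/2)) powr \<gamma> / (\<delta>/2)) + 3)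
     \<le> ((2*W+2) / \<delta>)\<^sup>2 * ((4*L+3) * (\<delta> powr \<gamma> / \<delta>))"
    using e1' e2 L d by (intro mult_mono) (auto intro: add_nonneg_nonneg mult_nonneg_nonneg)
  also have "\<dots> = (2*W+2)\<^sup>2 * (4*L+3) * (\<delta> powr \<gamma> / \<delta>^3)"
    by (simp add: power_divide power3_eq_cube power2_eq_square field_simps)
  also have "\<delta> powr \<gamma> / \<delta>^3 = \<delta> powr (\<gamma> - 3)"
  proof -
    have "\<delta> powr (3::real) = \<delta>^3" using powr_realpow[of \<delta> 3] d by simp
    then show ?thesis by (simp add: powr_diff)
  qed
  finally show ?thesis .
qed

context holder_graph
begin

lemma cover_bound:
  assumes d: "0 < \<delta>" "\<delta> \<le> 1"
  shows "\<exists>C. finite C \<and> G \<subseteq> \<Union>C \<and> (\<forall>U\<in>C. bounded U \<and> diameter U \<le> \<delta>) \<and>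
     real (card C) \<le> (2 * max (b-a) (d-c) + 2)\<^sup>2 * (4*L+3) * \<delta> powr (\<gamma> - 3)"
proof -
  define W where "W = max (b-a) (d-c)"
  define \<eta> where "\<eta> = \<delta> / 2"
  define N where "N = \<lceil>W / \<eta>\<rceil>"
  define m where "m = \<lceil>L * (2 * \<eta>) powr \<gamma> / \<eta>\<rceil>"
  define K where "K i j = {k. cellU \<eta> i j k \<noteq> {}}" for i j
  define S2 where "S2 = {0..N} \<times> {0..N}"
  define I where "I = Sigma S2 (\<lambda>(i, j). K i j)"
  define C where "C = (\<lambda>((i, j), k). cellU \<eta> i j k) ` I"
  have W0: "0 \<le> W" using ab by (simp add: W_def)
  have e0: "0 < \<eta>" using d by (simp add: \<eta>_def)
  have "0 \<le> W / \<eta>" using W0 e0 by simp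
  then have N0: "0 \<le> N" by (simp add: N_def)
  have "0 \<le> L * (2 * \<eta>) powr \<gamma> / \<eta>" using L e0 by simp
  then have m0: "0 \<le> m" by (simp add: m_def)
  have Kfin: "finite (K i j) \<and> card (K i j) \<le> nat (2*m+1)" for i j
  proof (cases "K i j = {}")
    case True then show ?thesis by simp
  next
    case False
    then obtain k0 where k0: "k0 \<in> K i j" by blast
    then obtain Q where Q: "Q \<in> cellU \<eta> i j k0" by (auto simp: K_def)
    have sub: "K i j \<subseteq> {k0 - m..k0 + m}"
    proof
      fix k assume "k \<in> K i j"
      then obtain P where P: "P \<in> cellU \<eta> i j k" by (auto simp: K_def)
      have "\<bar>k - k0\<bar> \<le> m" unfolding m_def by (rule cell_k[OF e0 P Q])
      then show "k \<in> {k0 - m..k0 + m}" by auto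
    qed
    then have "card (K i j) \<le> card {k0 - m..k0 + m}" by (intro card_mono) auto
    also have "\<dots> = nat (2*m+1)" by simp
    finally show ?thesis using sub finite_subset by blast
  qed
  have finS2: "finite S2" by (simp add: S2_def)
  have finI: "finite I" unfolding I_def using finS2 Kfin by (intro finite_SigmaI) auto
  have cardI: "card I \<le> card S2 * nat (2*m+1)"
  proof -
    have "card I = (\<Sum>x\<in>S2. card ((\<lambda>(i, j). K i j) x))"
      unfolding I_def using finS2 Kfin by (intro card_SigmaI) auto
    also have "\<dots> \<le> card S2 * nat (2*m+1)"
      using Kfin sum_bounded_above[of S2 "\<lambda>x. card ((\<lambda>(i, j). K i j) x)" "nat (2*m+1)"] by auto
    finally show ?thesis .
  qed
  have cardS2: "card S2 = nat (N+1) * nat (N+1)" by (simp add: S2_def card_cartesian_product)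
  have finC: "finite C" unfolding C_def using finI by simp
  have cardC: "card C \<le> card I" unfolding C_def using finI by (rule card_image_le)
  have cover: "G \<subseteq> \<Union>C"
  proof
    fix z assume zG: "z \<in> G"
    define i where "i = \<lfloor>(fst (fst z) - a) / \<eta>\<rfloor>"
    define j where "j = \<lfloor>(snd (fst z) - c) / \<eta>\<rfloor>"
    define k where "k = \<lfloor>snd z / \<eta>\<rfloor>"
    have zc: "z \<in> cellU \<eta> i j k" using zG by (simp add: cellU_def i_def j_def k_def)
    have r: "a \<le> fst (fst z)" "fst (fst z) \<le> b" "c \<le> snd (fst z)" "snd (fst z) \<le> d" using zG mem_G by auto
    have "i \<in> {0..N}"
    proof -
      have "0 \<le> (fst (fst z) - a) / \<eta>" using r e0 by simp
      moreover have "(fst (fst z) - a) / \<eta> \<le> W / \<eta>" using r e0 by (intro divide_right_mono) (auto simp: W_def)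
      moreover have "W / \<eta> \<le> of_int N" unfolding N_def by (rule le_of_int_ceiling)
      ultimately show ?thesis unfolding i_def by (auto simp: floor_le_iff intro!: floor_mono[THEN order_trans])
    qed
    moreover have "j \<in> {0..N}"
    proof -
      have "0 \<le> (snd (fst z) - c) / \<eta>" using r e0 by simp
      moreover have "(snd (fst z) - c) / \<eta> \<le> W / \<eta>" using r e0 by (intro divide_right_mono) (auto simp: W_def)
      moreover have "W / \<eta> \<le> of_int N" unfolding N_def by (rule le_of_int_ceiling)
      ultimately show ?thesis unfolding j_def by (auto simp: floor_le_iff intro!: floor_mono[THEN order_trans])
    qed
    moreover have "k \<in> K i j" using zc by (auto simp: K_def)
    ultimately have "((i, j), k) \<in> I" by (simp add: I_def S2_def)
    then show "z \<in> \<Union>C" using zc unfolding C_def by force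
  qed
  have props: "bounded U \<and> diameter U \<le> \<delta>" if "U \<in> C" for U
  proof -
    obtain i j k where U: "U = cellU \<eta> i j k" using \<open>U \<in> C\<close> unfolding C_def by auto
    have "U \<subseteq> G" unfolding U cellU_def by auto
    then have "bounded U" using G_bounded bounded_subset by blast
    moreover have "diameter U \<le> \<delta>"
    proof (rule diameter_le)
      show "U \<noteq> {} \<or> 0 \<le> \<delta>" using d by simp
      fix x y assume "x \<in> U" "y \<in> U"
      then have "dist x y \<le> 2 * \<eta>" using cell_diam[OF e0] U by blast
      then show "norm (x - y) \<le> \<delta>" by (simp add: dist_norm \<eta>_def)
    qed
    ultimately show ?thesis by blast
  qed
  have "real (card C) \<le> real (nat (N+1) * nat (N+1) * nat (2*m+1))"
    using cardC cardI cardS2 by (simp del: of_nat_mult)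
  also have "\<dots> = (of_int N + 1)\<^sup>2 * (2 * of_int m + 1)"
    using N0 m0 by (simp add: power2_eq_square)
  also have "\<dots> \<le> (W / \<eta> + 2)\<^sup>2 * (2 * (L * (2 * \<eta>) powr \<gamma> / \<eta>) + 3)"
  proof (intro mult_mono power_mono)
    show "of_int N + 1 \<le> W / \<eta> + 2" unfolding N_def by linarith
    show "2 * of_int m + 1 \<le> 2 * (L * (2 * \<eta>) powr \<gamma> / \<eta>) + 3" unfolding m_def by linarith
  qed (use N0 m0 in auto)
  also have "\<dots> \<le> (2*W+2)\<^sup>2 * (4*L+3) * \<delta> powr (\<gamma> - 3)"
    unfolding \<eta>_def by (rule numeric_bound[OF d W0 L gam])
  finally show ?thesis using finC cover props unfolding W_def by blast
qed

end


lemma rect_meas: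
  fixes x1 x2 y1 y2 :: real
  assumes "x1 \<le> x2" "y1 \<le> y2"
  shows "emeasure lborel (cbox (x1, y1) (x2, y2)) = ennreal ((x2 - x1) * (y2 - y1))"
proof -
  have "emeasure lborel (cbox (x1, y1) (x2, y2)) = emeasure (lborel \<Otimes>\<^sub>M lborel) ({x1..x2} \<times> {y1..y2})"
    by (simp add: lborel_prod cbox_Pair_eq)
  also have "\<dots> = emeasure lborel {x1..x2} * emeasure lborel {y1..y2}"
    by (rule lborel.emeasure_pair_measure_Times) auto
  also have "\<dots> = ennreal ((x2 - x1) * (y2 - y1))"
    using assms by (simp add: ennreal_mult)
  finally show ?thesis .
qed

definition sqU :: "((real \<times> real) \<times> real) set \<Rightarrow> (real \<times> real) set" where
  "sqU U = (if U = {} then {} else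
     cbox (fst (fst (SOME u. u \<in> U)) - diameter U, snd (fst (SOME u. u \<in> U)) - diameter U)
          (fst (fst (SOME u. u \<in> U)) + diameter U, snd (fst (SOME u. u \<in> U)) + diameter U))"

lemma sqU_sets: "sqU U \<in> sets lborel"
  by (simp add: sqU_def)

lemma sqU_borel: "sqU U \<in> sets borel"
  by (simp add: sqU_def)

lemma UN_sqU_seq:
  fixes U :: "nat \<Rightarrow> ((real \<times> real) \<times> real) set"
  shows "(\<Union>i. sqU (U i)) \<in> sets lborel"
proof -
  have "(\<Union>i. sqU (U i)) \<in> sets borel" by (intro sets.countable_UN') (auto simp: sqU_borel)
  then show ?thesis by simp
qed

lemma UN_sqU_fin: "finite C \<Longrightarrow> \<Union>(sqU ` C) \<in> sets lborel"
proof -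
  assume "finite C"
  then have "\<Union>(sqU ` C) \<in> sets borel" by (intro sets.finite_UN) (auto simp: sqU_borel)
  then show ?thesis by simp
qed

lemma sqU_meas: "bounded U \<Longrightarrow> emeasure lborel (sqU U) \<le> ennreal (4 * (diameter U)\<^sup>2)"
proof (cases "U = {}")
  case True then show ?thesis by (simp add: sqU_def)
next
  case False
  assume "bounded U"
  then have dd: "0 \<le> diameter U" by (rule diameter_ge_0)
  then show ?thesis using False
    by (simp add: sqU_def rect_meas power2_eq_square algebra_simps)
qed

lemma sqU_mem:
  assumes "bounded U" "u \<in> U"
  shows "fst u \<in> sqU U"
proof -
  define u0 where "u0 = (SOME u. u \<in> U)"
  have u0: "u0 \<in> U" unfolding u0_def using assms(2) by (rule someI)
  have dl: "dist u u0 \<le> diameter U" by (rule diameter_bounded_bound[OF assms(1) assms(2) u0])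
  have "\<bar>fst (fst u) - fst (fst u0)\<bar> \<le> dist u u0"
    using dist_fst_le[of "fst u" "fst u0"] dist_fst_le[of u u0] by (simp add: dist_real_def)
  moreover have "\<bar>snd (fst u) - snd (fst u0)\<bar> \<le> dist u u0"
    using dist_snd_le[of "fst u" "fst u0"] dist_fst_le[of u u0] by (simp add: dist_real_def)
  ultimately show ?thesis using dl assms(2)
    by (cases "fst u") (auto simp: sqU_def u0_def[symmetric] cbox_Pair_eq abs_le_iff)
qed

context holder_graph
begin

lemma R_sub:
  assumes "G \<subseteq> \<Union>S" "\<And>U. U \<in> S \<Longrightarrow> bounded U"
  shows "cbox (a, c) (b, d) \<subseteq> \<Union>(sqU ` S)"
proof
  fix P assume P: "P \<in> cbox (a, c) (b, d)"
  have "(P, g P) \<in> G" using P mem_G by (cases P) (auto simp: cbox_Pair_eq)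
  then obtain U where U: "U \<in> S" "(P, g P) \<in> U" using assms(1) by blast
  have "P \<in> sqU U" using sqU_mem[OF assms(2)[OF U(1)] U(2)] by simp
  then show "P \<in> \<Union>(sqU ` S)" using U by blast
qed

lemma area_R: "emeasure lborel (cbox (a, c) (b, d)) = ennreal ((b - a) * (d - c))"
  using ab by (intro rect_meas) auto

lemma finite_cover_area:
  assumes "finite C" "G \<subseteq> \<Union>C" "\<And>U. U \<in> C \<Longrightarrow> bounded U \<and> diameter U \<le> \<delta>" "0 \<le> \<delta>"
  shows "(b - a) * (d - c) \<le> real (card C) * (4 * \<delta>\<^sup>2)"
proof -
  have "ennreal ((b - a) * (d - c)) = emeasure lborel (cbox (a, c) (b, d))" by (rule area_R[symmetric])
  also have "\<dots> \<le> emeasure lborel (\<Union>(sqU ` C))"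
    using R_sub[OF assms(2)] assms(3) UN_sqU_fin[OF assms(1)] by (intro emeasure_mono) auto
  also have "\<dots> \<le> (\<Sum>U\<in>C. emeasure lborel (sqU U))"
    using assms(1) by (intro emeasure_subadditive_finite) (auto simp: sqU_sets sqU_borel)
  also have "\<dots> \<le> (\<Sum>U\<in>C. ennreal (4 * \<delta>\<^sup>2))"
  proof (intro sum_mono)
    fix U assume U: "U \<in> C"
    have "0 \<le> diameter U" using assms(3)[OF U] by (intro diameter_ge_0) auto
    then have "(diameter U)\<^sup>2 \<le> \<delta>\<^sup>2" using assms(3)[OF U] by (intro power_mono) auto
    then show "emeasure lborel (sqU U) \<le> ennreal (4 * \<delta>\<^sup>2)"
      using sqU_meas[of U] assms(3)[OF U] by (meson ennreal_leI mult_left_mono order_trans zero_le_numeral)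
  qed
  also have "\<dots> = ennreal (real (card C) * (4 * \<delta>\<^sup>2))" by (simp add: ennreal_mult ennreal_of_nat_eq_real_of_nat)
  finally show ?thesis
    by (subst (asm) ennreal_le_iff) auto
qed

lemma seq_cover_area:
  fixes U :: "nat \<Rightarrow> ((real \<times> real) \<times> real) set"
  assumes "G \<subseteq> (\<Union>i. U i)" "\<And>i. bounded (U i) \<and> diameter (U i) \<le> 1" "0 \<le> s" "s \<le> 2"
  shows "ennreal ((b - a) * (d - c)) \<le> ennreal 4 * (\<Sum>i. diam_pow s (U i))"
proof -
  have "ennreal ((b - a) * (d - c)) = emeasure lborel (cbox (a, c) (b, d))" by (rule area_R[symmetric])
  also have "\<dots> \<le> emeasure lborel (\<Union>i. sqU (U i))"
  proof -
    have "cbox (a, c) (b, d) \<subseteq> \<Union>(sqU ` range U)"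
      using R_sub[of "range U"] assms(1,2) by auto
    then show ?thesis using UN_sqU_seq[of U] by (intro emeasure_mono) auto
  qed
  also have "\<dots> \<le> (\<Sum>i. emeasure lborel (sqU (U i)))"
    by (intro emeasure_subadditive_countably) (auto simp: sqU_sets sqU_borel)
  also have "\<dots> \<le> (\<Sum>i. ennreal 4 * diam_pow s (U i))"
  proof (intro suminf_le allI)
    fix i
    show "emeasure lborel (sqU (U i)) \<le> ennreal 4 * diam_pow s (U i)"
    proof (cases "U i = {}")
      case True then show ?thesis by (simp add: sqU_def diam_pow_def)
    next
      case False
      have d0: "0 \<le> diameter (U i)" using assms(2) by (intro diameter_ge_0) auto
      have d1: "diameter (U i) \<le> 1" using assms(2) by auto
      have "(diameter (U i))\<^sup>2 \<le> (if s = 0 then 1 else diameter (U i) powr s)"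
      proof (cases "s = 0")
        case True
        then show ?thesis using d0 d1 by (simp add: power_le_one)
      next
        case False
        have "(diameter (U i))\<^sup>2 = diameter (U i) powr 2"
          using powr_realpow'[of "diameter (U i)" 2] d0 by simp
        also have "\<dots> \<le> diameter (U i) powr s" using d0 d1 assms by (intro powr_mono') auto
        finally show ?thesis using False by simp
      qed
      then have le4: "4 * (diameter (U i))\<^sup>2 \<le> 4 * (if s = 0 then 1 else diameter (U i) powr s)" by simp
      have dp: "diam_pow s (U i) = ennreal (if s = 0 then 1 else diameter (U i) powr s)"
        using False by (simp add: diam_pow_def)
      have nn: "0 \<le> (if s = 0 then 1 else diameter (U i) powr s)" by simp
      have "ennreal (4 * (diameter (U i))\<^sup>2) \<le> ennreal (4 * (if s = 0 then 1 else diameter (U i) powr s))"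
        using le4 by (rule ennreal_leI)
      also have "\<dots> = ennreal 4 * diam_pow s (U i)"
        unfolding dp using nn by (simp add: ennreal_mult)
      finally have "ennreal (4 * (diameter (U i))\<^sup>2) \<le> ennreal 4 * diam_pow s (U i)" .
      then show ?thesis using sqU_meas[of "U i"] assms(2)[of i] by (meson order_trans)
    qed
  qed auto
  also have "\<dots> = ennreal 4 * (\<Sum>i. diam_pow s (U i))" by simp
  finally show ?thesis .
qed

end


lemma neg_ln_at_top: "filterlim (\<lambda>\<delta>::real. - ln \<delta>) at_top (at_right 0)"
  using filterlim_uminus_at_top[of "\<lambda>\<delta>. - ln \<delta>" "at_right 0"] ln_at_0 by simp

lemma const_div_ln: "((\<lambda>\<delta>::real. C / (- ln \<delta>)) \<longlongrightarrow> 0) (at_right 0)"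
  by (rule tendsto_divide_0[OF tendsto_const filterlim_at_top_imp_at_infinity[OF neg_ln_at_top]])

lemma ev_small: "eventually (\<lambda>\<delta>::real. 0 < \<delta> \<and> \<delta> < 1) (at_right 0)"
  using eventually_at_right_real[of 0 1] by simp

context holder_graph
begin

definition KK where "KK = (2 * max (b-a) (d-c) + 2)\<^sup>2 * (4*L+3)"

lemma KK_pos: "0 < KK"
proof -
  have "0 < 2 * max (b-a) (d-c) + 2" using ab by (simp add: max_def)
  then show ?thesis unfolding KK_def using L by (intro mult_pos_pos) auto
qed

definition covs where "covs \<delta> = {C. finite C \<and> G \<subseteq> \<Union>C \<and> (\<forall>U\<in>C. bounded U \<and> diameter U \<le> \<delta>)}"

lemma cover_number_eq: "cover_number \<delta> G = Inf (card ` covs \<delta>)"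
  unfolding cover_number_def covs_def by (auto intro!: arg_cong[where f=Inf])

lemma cn_attained:
  assumes "0 < \<delta>" "\<delta> \<le> 1"
  obtains C where "C \<in> covs \<delta>" "card C = cover_number \<delta> G"
proof -
  obtain C where "C \<in> covs \<delta>" using cover_bound[OF assms] unfolding covs_def by blast
  then have "card ` covs \<delta> \<noteq> {}" by blast
  then have "Inf (card ` covs \<delta>) \<in> card ` covs \<delta>" by (rule Inf_nat_def1)
  then show ?thesis using that unfolding cover_number_eq by auto
qed

lemma cn_le:
  assumes "0 < \<delta>" "\<delta> \<le> 1"
  shows "real (cover_number \<delta> G) \<le> KK * \<delta> powr (\<gamma> - 3)"
proof -
  obtain C where C: "C \<in> covs \<delta>" "real (card C) \<le> KK * \<delta> powr (\<gamma> - 3)"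
    using cover_bound[OF assms] unfolding covs_def KK_def by blast
  have "cover_number \<delta> G \<le> card C" unfolding cover_number_eq using C(1) by (intro cInf_lower) auto
  then show ?thesis using C(2) by linarith
qed

lemma cn_ge:
  assumes "0 < \<delta>" "\<delta> \<le> 1"
  shows "(b - a) * (d - c) \<le> real (cover_number \<delta> G) * (4 * \<delta>\<^sup>2)"
proof -
  obtain C where C: "C \<in> covs \<delta>" "card C = cover_number \<delta> G" using cn_attained[OF assms] by blast
  show ?thesis using finite_cover_area[of C \<delta>] C assms unfolding covs_def by auto
qed

lemma cn_pos:
  assumes "0 < \<delta>" "\<delta> \<le> 1"
  shows "1 \<le> real (cover_number \<delta> G)"
proof -
  have "0 < (b - a) * (d - c)" using ab by simp
  then have "0 < real (cover_number \<delta> G) * (4 * \<delta>\<^sup>2)" using cn_ge[OF assms] by linarith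
  then have "0 < cover_number \<delta> G" by (cases "cover_number \<delta> G = 0") auto
  then show ?thesis by simp
qed

lemma upper_le: "upper_box_dim G \<le> ereal (3 - \<gamma>)"
proof -
  define h where "h \<delta> = ereal (3 - \<gamma> + ln KK / (- ln \<delta>))" for \<delta> :: real
  have ev: "eventually (\<lambda>\<delta>. ereal (ln (real (cover_number \<delta> G)) / - ln \<delta>) \<le> h \<delta>) (at_right 0)"
    using ev_small
  proof eventually_elim
    case (elim \<delta>)
    then have d: "0 < \<delta>" "\<delta> < 1" by auto
    have l: "0 < - ln \<delta>" using d by simp
    have N1: "1 \<le> real (cover_number \<delta> G)" using cn_pos d by simp
    have "ln (real (cover_number \<delta> G)) \<le> ln (KK * \<delta> powr (\<gamma> - 3))"
      using cn_le[of \<delta>] d N1 KK_pos by (subst ln_le_cancel_iff) auto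
    also have "\<dots> = ln KK + (\<gamma> - 3) * ln \<delta>" using KK_pos d by (simp add: ln_mult ln_powr)
    finally have "ln (real (cover_number \<delta> G)) / - ln \<delta> \<le> (ln KK + (\<gamma> - 3) * ln \<delta>) / - ln \<delta>"
      using l by (intro divide_right_mono) auto
    also have "\<dots> = 3 - \<gamma> + ln KK / (- ln \<delta>)" using l by (simp add: field_simps)
    finally show ?case unfolding h_def by simp
  qed
  have lim: "(h \<longlongrightarrow> ereal (3 - \<gamma>)) (at_right 0)"
    unfolding h_def using tendsto_add[OF tendsto_const const_div_ln[of "ln KK"], of "3 - \<gamma>"]
    by (intro tendsto_ereal) simp
  have "upper_box_dim G \<le> Limsup (at_right 0) h" unfolding upper_box_dim_def by (rule Limsup_mono[OF ev])
  also have "\<dots> = ereal (3 - \<gamma>)" by (rule lim_imp_Limsup[OF _ lim]) simp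
  finally show ?thesis .
qed

lemma lower_ge: "2 \<le> lower_box_dim G"
proof -
  define A where "A = (b - a) * (d - c)"
  have A0: "0 < A" using ab by (simp add: A_def)
  define h where "h \<delta> = ereal (2 + (ln A - ln 4) / (- ln \<delta>))" for \<delta> :: real
  have ev: "eventually (\<lambda>\<delta>. h \<delta> \<le> ereal (ln (real (cover_number \<delta> G)) / - ln \<delta>)) (at_right 0)"
    using ev_small
  proof eventually_elim
    case (elim \<delta>)
    then have d: "0 < \<delta>" "\<delta> < 1" by auto
    have l: "0 < - ln \<delta>" using d by simp
    have N1: "1 \<le> real (cover_number \<delta> G)" using cn_pos d by simp
    have "ln A \<le> ln (real (cover_number \<delta> G) * (4 * \<delta>\<^sup>2))"
    proof (subst ln_le_cancel_iff)
      show "0 < A" by (rule A0)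
      show "0 < real (cover_number \<delta> G) * (4 * \<delta>\<^sup>2)" using N1 d by simp
      show "A \<le> real (cover_number \<delta> G) * (4 * \<delta>\<^sup>2)" using cn_ge[of \<delta>] d unfolding A_def by simp
    qed
    also have "\<dots> = ln (real (cover_number \<delta> G)) + ln 4 + 2 * ln \<delta>"
      using d N1 by (simp add: ln_mult ln_realpow)
    finally have X: "ln A - ln 4 + 2 * (- ln \<delta>) \<le> ln (real (cover_number \<delta> G))" by linarith
    have "(ln A - ln 4 + 2 * (- ln \<delta>)) / (- ln \<delta>) \<le> ln (real (cover_number \<delta> G)) / - ln \<delta>"
      using X l by (intro divide_right_mono) auto
    moreover have "(ln A - ln 4 + 2 * (- ln \<delta>)) / (- ln \<delta>) = (ln A - ln 4) / - ln \<delta> + 2"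
      using l by (simp add: field_simps)
    ultimately have "(ln A - ln 4) / - ln \<delta> + 2 \<le> ln (real (cover_number \<delta> G)) / - ln \<delta>" by simp
    then show ?case unfolding h_def by simp
  qed
  have lim: "(h \<longlongrightarrow> ereal 2) (at_right 0)"
    unfolding h_def using tendsto_add[OF tendsto_const const_div_ln[of "ln A - ln 4"], of 2]
    by (intro tendsto_ereal) simp
  have "ereal 2 = Liminf (at_right 0) h" by (rule lim_imp_Liminf[OF _ lim, symmetric]) simp
  also have "\<dots> \<le> lower_box_dim G" unfolding lower_box_dim_def by (rule Liminf_mono[OF ev])
  finally show ?thesis by simp
qed

lemma lower_le_upper: "lower_box_dim G \<le> upper_box_dim G"
  unfolding lower_box_dim_def upper_box_dim_def by (rule Liminf_le_Limsup) simp

end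


context holder_graph
begin

lemma haus_pos:
  assumes "0 \<le> s" "s < 2"
  shows "hausdorff_measure s G \<noteq> 0"
proof -
  define A where "A = (b - a) * (d - c)"
  have A0: "0 < A" using ab by (simp add: A_def)
  have "ennreal (A / 4) \<le> hausdorff_pre s 1 G"
    unfolding hausdorff_pre_def
  proof (rule Inf_greatest)
    fix X assume "X \<in> {\<Sum>i. diam_pow s (U i) |U. G \<subseteq> (\<Union>i. U i) \<and> (\<forall>i. bounded (U i) \<and> diameter (U i) \<le> 1)}"
    then obtain U where U: "X = (\<Sum>i. diam_pow s (U i))" "G \<subseteq> (\<Union>i. U i)" "\<And>i. bounded (U i) \<and> diameter (U i) \<le> 1"
      by blast
    have "ennreal 4 * ennreal (A / 4) = ennreal (4 * (A / 4))"
      by (rule ennreal_mult[symmetric]) (use A0 in auto)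
    then have "ennreal 4 * ennreal (A / 4) = ennreal A" by simp
    also have "\<dots> \<le> ennreal 4 * X" unfolding U(1) A_def
      by (rule seq_cover_area[OF U(2) U(3)]) (use assms in auto)
    finally show "ennreal (A / 4) \<le> X"
      by (subst (asm) ennreal_mult_le_mult_iff) auto
  qed
  also have "\<dots> \<le> hausdorff_measure s G"
    unfolding hausdorff_measure_def by (rule SUP_upper) simp
  finally have "ennreal (A / 4) \<le> hausdorff_measure s G" .
  moreover have "0 < ennreal (A / 4)" using A0 by simp
  ultimately show ?thesis by auto
qed

lemma haus_ge: "2 \<le> hausdorff_dim G"
  unfolding hausdorff_dim_def
proof (rule Inf_greatest)
  fix x assume "x \<in> {ereal s |s. 0 \<le> s \<and> hausdorff_measure s G = 0}"
  then obtain s where s: "x = ereal s" "0 \<le> s" "hausdorff_measure s G = 0" by blast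
  show "2 \<le> x"
  proof (rule ccontr)
    assume "\<not> 2 \<le> x"
    then have "s < 2" using s(1) by simp
    then show False using haus_pos[OF s(2)] s(3) by simp
  qed
qed

lemma pre_antimono:
  assumes "\<delta> \<le> \<epsilon>"
  shows "hausdorff_pre s \<epsilon> E \<le> hausdorff_pre s \<delta> E"
  unfolding hausdorff_pre_def
proof (rule Inf_superset_mono, rule subsetI)
  fix X assume "X \<in> {\<Sum>i. diam_pow s (U i) |U. E \<subseteq> (\<Union>i. U i) \<and> (\<forall>i. bounded (U i) \<and> diameter (U i) \<le> \<delta>)}"
  then obtain U where U: "X = (\<Sum>i. diam_pow s (U i))" "E \<subseteq> (\<Union>i. U i)" "\<forall>i. bounded (U i) \<and> diameter (U i) \<le> \<delta>"
    by blast
  have "\<forall>i. bounded (U i) \<and> diameter (U i) \<le> \<epsilon>" using U(3) assms by (meson order_trans)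
  then show "X \<in> {\<Sum>i. diam_pow s (U i) |U. E \<subseteq> (\<Union>i. U i) \<and> (\<forall>i. bounded (U i) \<and> diameter (U i) \<le> \<epsilon>)}"
    using U(1,2) by blast
qed

lemma pre_le_cover:
  assumes "0 < s" "0 < \<delta>" "\<delta> \<le> 1"
  shows "hausdorff_pre s \<delta> G \<le> ennreal (real (cover_number \<delta> G) * \<delta> powr s)"
proof -
  obtain C where C: "C \<in> covs \<delta>" "card C = cover_number \<delta> G" using cn_attained[OF assms(2,3)] by blast
  have fC: "finite C" using C by (simp add: covs_def)
  obtain xs where xs: "set xs = C" "distinct xs" using finite_distinct_list[OF fC] by blast
  define U where "U i = (if i < length xs then xs ! i else {})" for i
  have Uin: "U i \<in> C \<or> U i = {}" for i unfolding U_def using xs by auto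
  have Cprop: "\<And>V. V \<in> C \<Longrightarrow> bounded V \<and> diameter V \<le> \<delta>" using C by (simp add: covs_def)
  have Ub: "bounded (U i) \<and> diameter (U i) \<le> \<delta>" for i
    using Uin[of i] Cprop assms by auto
  have cov: "G \<subseteq> (\<Union>i. U i)"
  proof
    fix z assume "z \<in> G"
    then obtain V where V: "V \<in> C" "z \<in> V" using C by (auto simp: covs_def)
    then obtain i where "i < length xs" "xs ! i = V" using xs by (metis in_set_conv_nth)
    then show "z \<in> (\<Union>i. U i)" using V unfolding U_def by auto
  qed
  have dp: "diam_pow s (U i) \<le> ennreal (\<delta> powr s)" for i
  proof (cases "U i = {}")
    case True then show ?thesis by (simp add: diam_pow_def)
  next
    case False
    have "0 \<le> diameter (U i)" using Ub[of i] by (intro diameter_ge_0) auto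
    then have "diameter (U i) powr s \<le> \<delta> powr s" using Ub[of i] assms by (intro powr_mono2) auto
    then show ?thesis using False assms by (simp add: diam_pow_def ennreal_leI)
  qed
  have "hausdorff_pre s \<delta> G \<le> (\<Sum>i. diam_pow s (U i))"
    unfolding hausdorff_pre_def by (rule Inf_lower) (use cov Ub in blast)
  also have "\<dots> = (\<Sum>i<length xs. diam_pow s (U i))"
    by (rule suminf_finite) (auto simp: U_def diam_pow_def)
  also have "\<dots> \<le> (\<Sum>i<length xs. ennreal (\<delta> powr s))" by (intro sum_mono dp)
  also have "\<dots> = ennreal (real (cover_number \<delta> G) * \<delta> powr s)"
    using xs C(2) distinct_card[OF xs(2)] by (simp add: ennreal_of_nat_eq_real_of_nat ennreal_mult)
  finally show ?thesis .
qed

lemma haus_le: "hausdorff_dim G \<le> upper_box_dim G"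
proof (rule ccontr)
  assume "\<not> hausdorff_dim G \<le> upper_box_dim G"
  then have lt: "upper_box_dim G < hausdorff_dim G" by simp
  obtain t where t: "upper_box_dim G < ereal t" "ereal t < hausdorff_dim G" using ereal_dense2[OF lt] by blast
  obtain s where s: "ereal t < ereal s" "ereal s < hausdorff_dim G" using ereal_dense2[OF t(2)] by blast
  have "2 \<le> upper_box_dim G" using lower_ge lower_le_upper by (rule order_trans)
  then have "ereal 2 < ereal t" using t(1) by (metis order_le_less_trans numeral_eq_ereal)
  then have t2: "2 < t" by simp
  have ts: "t < s" using s(1) by simp
  have ev: "eventually (\<lambda>\<delta>. ereal (ln (real (cover_number \<delta> G)) / - ln \<delta>) < ereal t) (at_right 0)"
    using t(1) unfolding upper_box_dim_def by (rule Limsup_lessD)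
  have ev2: "eventually (\<lambda>\<delta>. hausdorff_pre s \<delta> G \<le> ennreal (\<delta> powr (s - t))) (at_right 0)"
    using ev ev_small
  proof eventually_elim
    case (elim \<delta>)
    then have d: "0 < \<delta>" "\<delta> < 1" and r: "ln (real (cover_number \<delta> G)) / - ln \<delta> < t" by auto
    have l: "0 < - ln \<delta>" using d by simp
    have N1: "1 \<le> real (cover_number \<delta> G)" using cn_pos d by simp
    have "ln (real (cover_number \<delta> G)) < t * (- ln \<delta>)" using iffD1[OF pos_divide_less_eq[OF l] r] .
    then have "exp (ln (real (cover_number \<delta> G))) < exp (t * (- ln \<delta>))" by simp
    then have "real (cover_number \<delta> G) < exp (t * (- ln \<delta>))" using N1 by simp
    also have "exp (t * (- ln \<delta>)) = \<delta> powr (- t)" using d by (simp add: powr_def)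
    finally have Nl: "real (cover_number \<delta> G) < \<delta> powr (- t)" .
    have "real (cover_number \<delta> G) * \<delta> powr s \<le> \<delta> powr (- t) * \<delta> powr s"
      using Nl by (intro mult_right_mono) auto
    also have "\<dots> = \<delta> powr (s - t)" by (simp add: powr_add[symmetric])
    finally have "real (cover_number \<delta> G) * \<delta> powr s \<le> \<delta> powr (s - t)" .
    then have "ennreal (real (cover_number \<delta> G) * \<delta> powr s) \<le> ennreal (\<delta> powr (s - t))" by (rule ennreal_leI)
    then show ?case using pre_le_cover[of s \<delta>] t2 ts d by (meson order_trans less_trans zero_less_numeral less_le)
  qed
  have lim0: "((\<lambda>\<delta>::real. \<delta> powr (s - t)) \<longlongrightarrow> 0) (at_right 0)"
    by (rule tendsto_zero_powrI) (use ts in \<open>auto intro: tendsto_ident_at eventually_at_right_less simp: eventually_at_filter\<close>)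
  have pre0: "hausdorff_pre s \<epsilon> G = 0" if "0 < \<epsilon>" for \<epsilon>
  proof -
    have H: "hausdorff_pre s \<epsilon> G \<le> 0 + ennreal e" if e: "0 < e" for e
    proof -
      have "eventually (\<lambda>\<delta>. \<delta> powr (s - t) < e) (at_right 0)" using lim0 e by (rule order_tendstoD)
      moreover have "eventually (\<lambda>\<delta>. \<delta> < \<epsilon>) (at_right 0)"
        using eventually_at_right_real[OF \<open>0 < \<epsilon>\<close>] by eventually_elim auto
      ultimately have "eventually (\<lambda>\<delta>. \<delta> powr (s - t) < e \<and> \<delta> < \<epsilon> \<and> hausdorff_pre s \<delta> G \<le> ennreal (\<delta> powr (s - t))) (at_right 0)"
        using ev2 by eventually_elim auto
      then obtain \<delta> where \<delta>: "\<delta> powr (s - t) < e" "\<delta> < \<epsilon>" "hausdorff_pre s \<delta> G \<le> ennreal (\<delta> powr (s - t))"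
        using eventually_happens'[OF trivial_limit_at_right_real] by blast
      have "hausdorff_pre s \<epsilon> G \<le> hausdorff_pre s \<delta> G" using \<delta>(2) by (intro pre_antimono) simp
      also have "\<dots> \<le> ennreal (\<delta> powr (s - t))" by (rule \<delta>(3))
      also have "\<dots> \<le> ennreal e" using \<delta>(1) by (intro ennreal_leI) simp
      finally show ?thesis by simp
    qed
    have "hausdorff_pre s \<epsilon> G \<le> 0" by (rule ennreal_le_epsilon, rule H)
    then show ?thesis by simp
  qed
  have "hausdorff_measure s G = 0"
    unfolding hausdorff_measure_def
  proof (rule antisym)
    show "(SUP \<delta>\<in>{0<..}. hausdorff_pre s \<delta> G) \<le> 0"
      by (rule SUP_least) (simp add: pre0)
  qed simp
  moreover have "0 \<le> s" using t2 ts by simp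
  ultimately have "hausdorff_dim G \<le> ereal s"
    unfolding hausdorff_dim_def by (intro Inf_lower) blast
  then show False using s(2) by simp
qed

end


theorem mainTheorem8:
  fixes f :: "real \<times> real \<Rightarrow> real" and a b c d p q \<alpha> \<beta> :: real
  assumes "continuous_on (cbox (a, c) (b, d)) f"
    and "0 < a" "a < b" "0 < c" "c < d"
    and "-1 < p" "p \<le> 0" "-1 < q" "q \<le> 0"
  shows "(0 < \<alpha> \<and> \<alpha> < 1 \<and> 0 < \<beta> \<and> \<beta> < 1 \<longrightarrow>
           (let G = graph_on a b c d (katugampola_mixed p q a c \<alpha> \<beta> f) in
              2 \<le> hausdorff_dim G \<and> hausdorff_dim G \<le> upper_box_dim G \<and>
              upper_box_dim G \<le> ereal (3 - min \<alpha> \<beta>)))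
       \<and> (1 \<le> \<alpha> \<and> 1 \<le> \<beta> \<longrightarrow>
           (let G = graph_on a b c d (katugampola_mixed p q a c \<alpha> \<beta> f) in
              box_dim_exists G \<and> hausdorff_dim G = 2 \<and> box_dim G = 2))"
proof (intro conjI impI)
  assume h: "0 < \<alpha> \<and> \<alpha> < 1 \<and> 0 < \<beta> \<and> \<beta> < 1"
  then obtain L where L: "0 < L" and hold: "\<forall>P\<in>cbox (a, c) (b, d). \<forall>Q\<in>cbox (a, c) (b, d).
     \<bar>katugampola_mixed p q a c \<alpha> \<beta> f P - katugampola_mixed p q a c \<alpha> \<beta> f Q\<bar>
       \<le> L * dist P Q powr (min (min \<alpha> 1) (min \<beta> 1))"
    using kat_holder[OF assms, of \<alpha> \<beta>] by auto
  have gm: "min (min \<alpha> 1) (min \<beta> 1) = min \<alpha> \<beta>" using h by simp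
  interpret holder_graph a b c d "katugampola_mixed p q a c \<alpha> \<beta> f" L "min \<alpha> \<beta>"
    by unfold_locales (use assms h L hold gm in auto)
  show "let G = graph_on a b c d (katugampola_mixed p q a c \<alpha> \<beta> f) in
              2 \<le> hausdorff_dim G \<and> hausdorff_dim G \<le> upper_box_dim G \<and>
              upper_box_dim G \<le> ereal (3 - min \<alpha> \<beta>)"
    using haus_ge haus_le upper_le by simp
next
  assume h: "1 \<le> \<alpha> \<and> 1 \<le> \<beta>"
  then obtain L where L: "0 < L" and hold: "\<forall>P\<in>cbox (a, c) (b, d). \<forall>Q\<in>cbox (a, c) (b, d).
     \<bar>katugampola_mixed p q a c \<alpha> \<beta> f P - katugampola_mixed p q a c \<alpha> \<beta> f Q\<bar>
       \<le> L * dist P Q powr (min (min \<alpha> 1) (min \<beta> 1))"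
    using kat_holder[OF assms, of \<alpha> \<beta>] by auto
  have gm: "min (min \<alpha> 1) (min \<beta> 1) = 1" using h by simp
  interpret holder_graph a b c d "katugampola_mixed p q a c \<alpha> \<beta> f" L 1
    by unfold_locales (use assms h L hold gm in auto)
  have u: "upper_box_dim G \<le> 2" using upper_le by simp
  have l: "2 \<le> lower_box_dim G" by (rule lower_ge)
  have ul: "upper_box_dim G = 2" using u l lower_le_upper by (meson antisym order_trans)
  have ll: "lower_box_dim G = 2" using u l lower_le_upper by (meson antisym order_trans)
  have hh: "hausdorff_dim G = 2" using haus_ge haus_le ul by (simp add: antisym)
  show "let G = graph_on a b c d (katugampola_mixed p q a c \<alpha> \<beta> f) in
              box_dim_exists G \<and> hausdorff_dim G = 2 \<and> box_dim G = 2"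
    using ul ll hh by (simp add: box_dim_exists_def box_dim_def)
qed

end
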